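(* (1) For $\chi=0$ or $\chi=e$, the coinvariant algebra $C_\alpha$ of the block $A_\alpha$ (indexed by squares $\alpha\in\mathbb{F}_p$) is $k[c]/(c-\alpha)^2$ if $\alpha$ is a nonzero quadratic residue and $k[c]/(c)$ if $\alpha=0$. (2) For $\chi=ah/2$ with $a\in k^\times$, the coinvariant algebra of $A_\alpha$ (indexed by roots $\alpha$ of $c^p-2c^{(p+1)/2}+c-a^2$) is $k[c]/(c-\alpha)$.
   Context: Let $k$ be an algebraically closed field of characteristic $p>2$, $\mathfrak{sl}_2=\mathfrak{sl}_2(k)$ with standard basis $e,f,h$. $\mathcal{U}_0(\mathfrak{sl}_2)=\mathcal{U}(\mathfrak{sl}_2)/\langle e^p,f^p,h^p-h\rangle$, $\mathcal{U}_e(\mathfrak{sl}_2)=\mathcal{U}(\mathfrak{sl}_2)/\langle e^p,f^p-1,h^p-h\rangle$, $\mathcal{U}_{ah/2}(\mathfrak{sl}_2)=\mathcal{U}(\mathfrak{sl}_2)/\langle e^p,f^p,h^p-h-a\rangle$. $c=(h-1)^2+4ef$ generates the center $\mathcal{U}(\mathfrak{sl}_2)^{\mathrm{SL}_2}=k[c]$. $\mathcal{U}_\chi(\mathfrak{sl}_2)=\bigoplus_\alpha A_\alpha$ is the block decomposition, where $A_\alpha=\pi_\alpha\mathcal{U}_\chi(\mathfrak{sl}_2)$ ($\pi_\alpha$ central idempotents) is the block on whose simple modules $c$ acts by the scalar $\alpha$. The coinvariant algebra $C_\alpha$ is the image of the center of $\mathcal{U}(\mathfrak{sl}_2)$ (equivalently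 of $k[c]$) in $A_\alpha$, presented as a quotient of $k[c]$. *)

theory Defs
  imports "HOL-Computational_Algebra.Polynomial"
begin

definition alg_closed :: "'k::field itself \<Rightarrow> bool" where
  "alg_closed _ \<longleftrightarrow> (\<forall>q::'k poly. degree q > 0 \<longrightarrow> (\<exists>x. poly q x = 0))"

definition k_algebra :: "('k::field \<Rightarrow> 'a::ring_1) \<Rightarrow> bool" where
  "k_algebra sc \<longleftrightarrow> sc 0 = 0 \<and> sc 1 = 1 \<and>
     (\<forall>x y. sc (x + y) = sc x + sc y) \<and> (\<forall>x y. sc (x * y) = sc x * sc y) \<and>
     (\<forall>x y. sc x * y = y * sc x)"

text \<open>Together with the reduced relations (imposed separately) this characterises
  the reduced enveloping algebra U_chi(sl_2) up to isomorphism.\<close>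
definition sl2_pbw_algebra ::
  "nat \<Rightarrow> ('k::field \<Rightarrow> 'a::ring_1) \<Rightarrow> 'a \<Rightarrow> 'a \<Rightarrow> 'a \<Rightarrow> bool" where
  "sl2_pbw_algebra p sc e f h \<longleftrightarrow>
     k_algebra sc \<and>
     h * e - e * h = 2 * e \<and> h * f - f * h = - (2 * f) \<and> e * f - f * e = h \<and>
     (\<forall>cf :: nat \<Rightarrow> nat \<Rightarrow> nat \<Rightarrow> 'k.
        (\<Sum>i<p. \<Sum>j<p. \<Sum>l<p. sc (cf i j l) * (f ^ i * h ^ j * e ^ l)) = 0 \<longrightarrow>
        (\<forall>i<p. \<forall>j<p. \<forall>l<p. cf i j l = 0)) \<and>
     (\<forall>x. \<exists>cf :: nat \<Rightarrow> nat \<Rightarrow> nat \<Rightarrow> 'k.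
        x = (\<Sum>i<p. \<Sum>j<p. \<Sum>l<p. sc (cf i j l) * (f ^ i * h ^ j * e ^ l)))"

definition casimir :: "'a::ring_1 \<Rightarrow> 'a \<Rightarrow> 'a \<Rightarrow> 'a" where
  "casimir e f h = (h - 1)^2 + 4 * e * f"

definition central :: "'a::ring_1 \<Rightarrow> bool" where
  "central z \<longleftrightarrow> (\<forall>x. z * x = x * z)"

text \<open>Primitive central idempotent (= unit of a block).\<close>
definition prim_central_idem :: "'a::ring_1 \<Rightarrow> bool" where
  "prim_central_idem \<pi> \<longleftrightarrow> \<pi> \<noteq> 0 \<and> \<pi> * \<pi> = \<pi> \<and> central \<pi> \<and>
     (\<forall>\<epsilon>. central \<epsilon> \<and> \<epsilon> * \<epsilon> = \<epsilon> \<and> \<epsilon> * \<pi> = \<epsilon> \<longrightarrow> \<epsilon> = 0 \<or> \<epsilon> = \<pi>)"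

definition left_ideal :: "'a::ring_1 set \<Rightarrow> bool" where
  "left_ideal M \<longleftrightarrow> 0 \<in> M \<and> (\<forall>x\<in>M. \<forall>y\<in>M. x + y \<in> M) \<and> (\<forall>r. \<forall>x\<in>M. r * x \<in> M)"

definition max_left_ideal :: "'a::ring_1 set \<Rightarrow> bool" where
  "max_left_ideal M \<longleftrightarrow> left_ideal M \<and> M \<noteq> UNIV \<and>
     (\<forall>N. left_ideal N \<and> M \<subseteq> N \<longrightarrow> N = M \<or> N = UNIV)"

text \<open>Every simple module is A/M for a maximal left ideal M; it belongs to the block
  of \<pi> iff \<pi> acts as the identity on it, i.e. 1 - \<pi> \<in> M; the central element z acts
  on A/M by the scalar \<alpha> iff z - \<alpha> \<in> M.  block_scalar says z acts by \<alpha> on every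
  simple module of the block A_\<pi> = \<pi> A.\<close>
definition block_scalar :: "('k::field \<Rightarrow> 'a::ring_1) \<Rightarrow> 'a \<Rightarrow> 'a \<Rightarrow> 'k \<Rightarrow> bool" where
  "block_scalar sc z \<pi> \<alpha> \<longleftrightarrow>
     (\<forall>M. max_left_ideal M \<and> 1 - \<pi> \<in> M \<longrightarrow> z - sc \<alpha> \<in> M)"

definition peval :: "('k::field \<Rightarrow> 'a::ring_1) \<Rightarrow> 'k poly \<Rightarrow> 'a \<Rightarrow> 'a" where
  "peval sc q x = (\<Sum>i\<le>degree q. sc (coeff q i) * x ^ i)"

text \<open>Kernel of k[c] \<rightarrow> A_\<pi>, q \<mapsto> \<pi> q(c); the coinvariant algebra is k[c] modulo this.\<close>
definition coinv_kernel :: "('k::field \<Rightarrow> 'a::ring_1) \<Rightarrow> 'a \<Rightarrow> 'a \<Rightarrow> 'k poly set" where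
  "coinv_kernel sc z \<pi> = {q. \<pi> * peval sc q z = 0}"

end

theory Submission
  imports Defs "HOL-Computational_Algebra.Computational_Algebra" "HOL-Number_Theory.Cong"
begin

locale kalg =
  fixes sc :: "'k::field \<Rightarrow> 'a::ring_1"
  assumes ka: "k_algebra sc"
begin

lemma sc_0[simp]: "sc 0 = 0" using ka unfolding k_algebra_def by blast
lemma sc_1[simp]: "sc 1 = 1" using ka unfolding k_algebra_def by blast


lemma sc_add: "sc (x + y) = sc x + sc y" using ka unfolding k_algebra_def by blast
lemma sc_mult: "sc (x * y) = sc x * sc y" using ka unfolding k_algebra_def by blast
lemma sc_comm: "sc x * y = y * sc x" using ka unfolding k_algebra_def by blast

lemma sc_minus: "sc (- x) = - sc x"
proof -
  have "sc (- x) + sc x = 0" by (simp flip: sc_add)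
  thus ?thesis by (simp add: eq_neg_iff_add_eq_0)
qed

lemma sc_diff: "sc (x - y) = sc x - sc y"
  using sc_add[of x "- y"] by (simp add: sc_minus)

lemma sc_of_nat[simp]: "sc (of_nat n) = of_nat n"
  by (induction n) (simp_all add: sc_add)

lemma sc_numeral[simp]: "sc (numeral n) = numeral n"
  using sc_of_nat[of "numeral n"] by simp

lemma sc_power: "sc (x ^ n) = sc x ^ n"
  by (induction n) (simp_all add: sc_mult)

lemma sc_sum: "sc (sum g A) = sum (\<lambda>i. sc (g i)) A"
  by (induction A rule: infinite_finite_induct) (simp_all add: sc_add)

lemma sc_comm2: "y * sc x * z = sc x * (y * z)"
  by (metis sc_comm mult.assoc)

lemma sc_left_comm: "y * (sc x * z) = sc x * (y * z)"
  by (metis sc_comm mult.assoc)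

lemma sc_inv_cancel: "x \<noteq> 0 \<Longrightarrow> sc (inverse x) * (sc x * y) = y"
  by (metis mult.assoc sc_mult sc_1 left_inverse mult_1_left)

lemma sc_mult_zero: "x \<noteq> 0 \<Longrightarrow> sc x * y = 0 \<Longrightarrow> y = 0"
  using sc_inv_cancel[of x y] by simp



lemma peval_sum_less:
  assumes "degree q < n"
  shows "peval sc q x = (\<Sum>i<n. sc (coeff q i) * x ^ i)"
  unfolding peval_def
proof (rule sum.mono_neutral_left)
  show "finite {..<n}" by simp
  show "{..degree q} \<subseteq> {..<n}" using assms by auto
  show "\<forall>i\<in>{..<n} - {..degree q}. sc (coeff q i) * x ^ i = 0"
    by (auto simp: coeff_eq_0)
qed

lemma peval_pCons: "peval sc (pCons c q) x = sc c + x * peval sc q x"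
proof -
  define N where "N = Suc (degree q)"
  have d1: "degree q < N" by (simp add: N_def)
  have d2: "degree (pCons c q) < Suc N"
    using degree_pCons_le[of c q] by (simp add: N_def)
  have "peval sc (pCons c q) x = (\<Sum>i<Suc N. sc (coeff (pCons c q) i) * x ^ i)"
    by (rule peval_sum_less[OF d2])
  also have "\<dots> = sc c + (\<Sum>i<N. sc (coeff q i) * x ^ Suc i)"
    by (subst sum.lessThan_Suc_shift) simp
  also have "(\<Sum>i<N. sc (coeff q i) * x ^ Suc i) = x * (\<Sum>i<N. sc (coeff q i) * x ^ i)"
    by (simp add: sum_distrib_left sc_left_comm)
  also have "(\<Sum>i<N. sc (coeff q i) * x ^ i) = peval sc q x"
    by (rule peval_sum_less[OF d1, symmetric])
  finally show ?thesis .
qed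

lemma peval_0[simp]: "peval sc 0 x = 0"
  by (simp add: peval_def)

lemma peval_const[simp]: "peval sc [:c:] x = sc c"
  using peval_pCons[of c 0 x] by simp

lemma peval_add: "peval sc (q1 + q2) x = peval sc q1 x + peval sc q2 x"
proof (induction q1 arbitrary: q2)
  case (pCons a p)
  show ?case
  proof (cases q2 rule: pCons_cases)
    case (pCons b q)
    show ?thesis using pCons.IH[of q]
      by (simp add: \<open>q2 = pCons b q\<close> peval_pCons sc_add distrib_left algebra_simps)
  qed
qed simp

lemma peval_smult: "peval sc (smult c q) x = sc c * peval sc q x"
proof (induction q)
  case (pCons a p)
  then show ?case
    by (simp add: peval_pCons sc_mult distrib_left sc_left_comm mult.assoc)
qed simp

lemma peval_minus: "peval sc (- q) x = - peval sc q x"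
proof -
  have "peval sc (- q) x + peval sc q x = 0" by (simp flip: peval_add)
  thus ?thesis by (simp add: eq_neg_iff_add_eq_0)
qed

lemma peval_diff: "peval sc (q1 - q2) x = peval sc q1 x - peval sc q2 x"
  using peval_add[of q1 "- q2" x] by (simp add: peval_minus)

lemma peval_mult: "peval sc (q1 * q2) x = peval sc q1 x * peval sc q2 x"
proof (induction q1)
  case (pCons a p)
  have "pCons a p * q2 = smult a q2 + pCons 0 (p * q2)" by simp
  then show ?case using pCons
    by (simp add: peval_add peval_smult peval_pCons distrib_right mult.assoc)
qed simp

lemma peval_one[simp]: "peval sc 1 x = 1"
  using peval_const[of 1 x] by (simp add: one_pCons)

lemma peval_X[simp]: "peval sc [:c, 1:] x = sc c + x"
  by (simp add: peval_pCons)

lemma peval_power: "peval sc (q ^ n) x = peval sc q x ^ n"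
  by (induction n) (simp_all add: peval_mult)

lemma peval_monom: "peval sc (monom c n) x = sc c * x ^ n"
proof -
  have "monom c n = smult c ([:0,1:] ^ n)" by (simp add: monom_altdef)
  thus ?thesis by (simp add: peval_smult peval_power)
qed

lemma peval_sum: "peval sc (sum g A) x = (\<Sum>i\<in>A. peval sc (g i) x)"
  by (induction A rule: infinite_finite_induct) (simp_all add: peval_add)

lemma peval_prod_comm:
  fixes g :: "'b \<Rightarrow> 'k poly"
  shows "peval sc (prod g A) x = peval sc (prod g A) x" ..

lemma peval_commute:
  assumes "y * x = x * y"
  shows "y * peval sc q x = peval sc q x * y"
proof (induction q)
  case (pCons a p)
  then show ?case
    by (simp add: peval_pCons distrib_left distrib_right sc_comm assms mult.assoc[symmetric])
       (simp add: mult.assoc assms)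
qed simp

lemma peval_intertwine:
  assumes "y * x = z * y"
  shows "y * peval sc q x = peval sc q z * y"
proof (induction q)
  case (pCons a p)
  have "y * (x * peval sc p x) = z * (peval sc p z * y)"
    by (simp add: mult.assoc[symmetric] assms) (simp add: mult.assoc pCons)
  then show ?case
    by (simp add: peval_pCons distrib_left distrib_right sc_comm mult.assoc)
qed simp

lemma peval_pcompose: "peval sc (pcompose q r) x = peval sc q (peval sc r x)"
proof (induction q)
  case (pCons a p)
  then show ?case
    by (simp add: pcompose_pCons peval_add peval_mult peval_pCons)
qed simp

lemma peval_peval_commute: "peval sc q1 x * peval sc q2 x = peval sc q2 x * peval sc q1 x"
  by (simp flip: peval_mult add: mult.commute)

end

lemma (in kalg) num_comm: "numeral n * (x::'a) = x * numeral n"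
  by (metis sc_comm sc_numeral)

lemma (in kalg) num_left_comm: "(x::'a) * (numeral n * y) = numeral n * (x * y)"
  by (metis num_comm mult.assoc)

locale sl2 = kalg sc for sc :: "'k::field \<Rightarrow> 'a::ring_1" +
  fixes p :: nat and e f h :: 'a and t a :: 'k
  assumes prime_p: "prime p" and p_gt: "p > 2" and charp: "CHAR('k) = p"
    and algc: "alg_closed TYPE('k)"
    and pbw: "sl2_pbw_algebra p sc e f h"
    and ep: "e ^ p = 0" and fp: "f ^ p = sc t" and hp: "h ^ p - h = sc a"
begin

lemma rel_he: "h * e - e * h = 2 * e" using pbw unfolding sl2_pbw_algebra_def by (elim conjE) assumption
lemma rel_hf: "h * f - f * h = - (2 * f)" using pbw unfolding sl2_pbw_algebra_def by (elim conjE) assumption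
lemma rel_ef: "e * f - f * e = h" using pbw unfolding sl2_pbw_algebra_def by (elim conjE) assumption

lemma ef: "e * f = f * e + h" using rel_ef by (simp add: algebra_simps)
lemma eh: "e * h = h * e - (e + e)" using rel_he by (simp add: algebra_simps mult_2)
lemma hf: "h * f = f * h - (f + f)" using rel_hf by (simp add: algebra_simps mult_2)
lemma ef': "e * (f * z) = f * (e * z) + h * z" by (simp add: mult.assoc[symmetric] ef distrib_right)
lemma eh': "e * (h * z) = h * (e * z) - (e * z + e * z)"
  by (simp add: mult.assoc[symmetric] eh left_diff_distrib distrib_right)
lemma hf': "h * (f * z) = f * (h * z) - (f * z + f * z)"
  by (simp add: mult.assoc[symmetric] hf left_diff_distrib distrib_right)

lemma four: "4 * (x::'a) = x + x + x + x"
proof -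
  have "(4::'a) = 1 + 1 + 1 + 1" by simp
  thus ?thesis by (simp only: distrib_right mult_1_left)
qed

lemmas norm = mult.assoc distrib_left distrib_right left_diff_distrib right_diff_distrib
  ef ef' eh eh' hf hf' mult_minus_left mult_minus_right

definition "cas = casimir e f h"

lemma cas_alt: "cas = (h + 1) * (h + 1) + (f * e + f * e + f * e + f * e)"
  unfolding cas_def casimir_def power2_eq_square mult.assoc four by (simp add: norm algebra_simps)

lemma cas_e: "cas * e = e * cas"
  unfolding cas_alt by (simp add: norm algebra_simps)

lemma cas_f: "cas * f = f * cas"
  unfolding cas_alt by (simp add: norm algebra_simps)

lemma cas_h: "cas * h = h * cas"
  unfolding cas_alt by (simp add: norm algebra_simps)

end

lemma li_0: "left_ideal M \<Longrightarrow> 0 \<in> M" by (simp add: left_ideal_def)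
lemma li_add: "left_ideal M \<Longrightarrow> x \<in> M \<Longrightarrow> y \<in> M \<Longrightarrow> x + y \<in> M" by (simp add: left_ideal_def)
lemma li_mult: "left_ideal M \<Longrightarrow> x \<in> M \<Longrightarrow> r * x \<in> M" by (simp add: left_ideal_def)
lemma li_minus: "left_ideal M \<Longrightarrow> x \<in> M \<Longrightarrow> - x \<in> M"
  using li_mult[of M x "- 1"] by simp
lemma li_diff: "left_ideal M \<Longrightarrow> x \<in> M \<Longrightarrow> y \<in> M \<Longrightarrow> x - y \<in> M"
  using li_add[of M x "- y"] li_minus[of M y] by simp
lemma li_diff_rev: "left_ideal M \<Longrightarrow> x - y \<in> M \<Longrightarrow> y - z \<in> M \<Longrightarrow> x - z \<in> M"
  using li_add[of M "x - y" "y - z"] by simp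
lemma li_one: "left_ideal M \<Longrightarrow> 1 \<in> M \<Longrightarrow> M = UNIV"
  using li_mult[of M 1] by (metis UNIV_eq_I mult_1_right)
lemma li_sum: "left_ideal M \<Longrightarrow> (\<And>i. i \<in> A \<Longrightarrow> g i \<in> M) \<Longrightarrow> sum g A \<in> M"
  by (induction A rule: infinite_finite_induct) (auto simp: li_0 li_add)

lemma max_li: "max_left_ideal M \<Longrightarrow> left_ideal M" by (simp add: max_left_ideal_def)
lemma max_1: "max_left_ideal M \<Longrightarrow> 1 \<notin> M"
  using li_one by (auto simp: max_left_ideal_def)

lemma exists_max_left_ideal:
  fixes I :: "'a::ring_1 set"
  assumes "left_ideal I" "1 \<notin> I"
  shows "\<exists>M. max_left_ideal M \<and> I \<subseteq> M"
proof -
  define A where "A = {N. left_ideal N \<and> 1 \<notin> N \<and> I \<subseteq> N}"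
  have "\<exists>M\<in>A. \<forall>X\<in>A. M \<subseteq> X \<longrightarrow> X = M"
  proof (rule Zorn_Lemma2, intro ballI)
    fix C assume C: "C \<in> chains A"
    show "\<exists>U\<in>A. \<forall>X\<in>C. X \<subseteq> U"
    proof (cases "C = {}")
      case True
      then show ?thesis using assms by (auto simp: A_def)
    next
      case False
      have CA: "C \<subseteq> A" using C by (rule chainsD2)
      have "\<Union>C \<in> A"
        unfolding A_def mem_Collect_eq left_ideal_def
      proof (intro conjI ballI allI)
        obtain N where "N \<in> C" using False by blast
        then show "0 \<in> \<Union>C" using CA by (auto simp: A_def left_ideal_def)
        show "I \<subseteq> \<Union>C" using \<open>N \<in> C\<close> CA by (auto simp: A_def)
      next
        fix x y assume "x \<in> \<Union>C" "y \<in> \<Union>C"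
        then obtain N1 N2 where N: "N1 \<in> C" "N2 \<in> C" "x \<in> N1" "y \<in> N2" by blast
        from chainsD[OF C N(1,2)] show "x + y \<in> \<Union>C"
        proof
          assume "N1 \<subseteq> N2"
          moreover have "left_ideal N2" using N CA by (auto simp: A_def)
          ultimately have "x + y \<in> N2" using N li_add by blast
          then show ?thesis using N by blast
        next
          assume "N2 \<subseteq> N1"
          moreover have "left_ideal N1" using N CA by (auto simp: A_def)
          ultimately have "x + y \<in> N1" using N li_add by blast
          then show ?thesis using N by blast
        qed
      next
        fix r x assume "x \<in> \<Union>C"
        then obtain N where N: "N \<in> C" "x \<in> N" by blast
        then have "left_ideal N" using CA by (auto simp: A_def)
        then have "r * x \<in> N" using N li_mult by blast
        then show "r * x \<in> \<Union>C" using N by blast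
      next
        show "1 \<notin> \<Union>C" using CA by (auto simp: A_def)
      qed
      then show ?thesis by blast
    qed
  qed
  then obtain M where M: "M \<in> A" "\<And>X. X \<in> A \<Longrightarrow> M \<subseteq> X \<Longrightarrow> X = M" by blast
  have "max_left_ideal M"
    unfolding max_left_ideal_def
  proof (intro conjI allI impI)
    show "left_ideal M" using M by (simp add: A_def)
    show "M \<noteq> UNIV" using M by (auto simp: A_def)
    fix N assume N: "left_ideal N \<and> M \<subseteq> N"
    show "N = M \<or> N = UNIV"
    proof (cases "1 \<in> N")
      case True then show ?thesis using N li_one by blast
    next
      case False
      then have "N \<in> A" using N M by (auto simp: A_def)
      then show ?thesis using M N by blast
    qed
  qed
  then show ?thesis using M by (auto simp: A_def)
qed

lemma exists_block_ideal:
  fixes \<pi> :: "'a::ring_1"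
  assumes "prim_central_idem \<pi>"
  shows "\<exists>M. max_left_ideal M \<and> 1 - \<pi> \<in> M"
proof -
  have pi: "\<pi> \<noteq> 0" "\<pi> * \<pi> = \<pi>" "central \<pi>" using assms by (auto simp: prim_central_idem_def)
  define I where "I = {x * (1 - \<pi>) | x. True}"
  have "left_ideal I"
    unfolding left_ideal_def I_def
  proof (intro conjI ballI allI)
    show "0 \<in> {x * (1 - \<pi>) |x. True}" by (rule CollectI, rule exI[of _ 0]) simp
  next
    fix x y assume "x \<in> {x * (1 - \<pi>) |x. True}" "y \<in> {x * (1 - \<pi>) |x. True}"
    then obtain x' y' where "x = x' * (1 - \<pi>)" "y = y' * (1 - \<pi>)" by blast
    then show "x + y \<in> {x * (1 - \<pi>) |x. True}" by (auto simp: distrib_right intro!: exI[of _ "x' + y'"])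
  next
    fix r x assume "x \<in> {x * (1 - \<pi>) |x. True}"
    then obtain x' where "x = x' * (1 - \<pi>)" by blast
    then show "r * x \<in> {x * (1 - \<pi>) |x. True}" by (auto simp: mult.assoc intro!: exI[of _ "r * x'"])
  qed
  moreover have "1 \<notin> I"
  proof
    assume "1 \<in> I"
    then obtain x where x: "1 = x * (1 - \<pi>)" by (auto simp: I_def)
    have "\<pi> = x * (1 - \<pi>) * \<pi>" using x by simp
    also have "\<dots> = 0" using pi(2) by (simp add: mult.assoc left_diff_distrib)
    finally show False using pi(1) by simp
  qed
  moreover have "1 - \<pi> \<in> I" by (auto simp: I_def intro!: exI[of _ 1])
  ultimately show ?thesis using exists_max_left_ideal by blast
qed

context sl2
begin

definition Lc :: "(nat \<Rightarrow> nat \<Rightarrow> nat \<Rightarrow> 'k) \<Rightarrow> 'a" where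
  "Lc cf = (\<Sum>i<p. \<Sum>j<p. \<Sum>l<p. sc (cf i j l) * (f ^ i * h ^ j * e ^ l))"

lemma indep: "Lc cf = 0 \<Longrightarrow> i < p \<Longrightarrow> j < p \<Longrightarrow> l < p \<Longrightarrow> cf i j l = 0"
  using pbw unfolding sl2_pbw_algebra_def Lc_def by (elim conjE) blast

lemma span: "\<exists>cf. x = Lc cf"
  using pbw unfolding sl2_pbw_algebra_def Lc_def by (elim conjE) blast

lemma Lc_diff: "Lc cf1 - Lc cf2 = Lc (\<lambda>i j l. cf1 i j l - cf2 i j l)"
  unfolding Lc_def by (simp add: sc_diff left_diff_distrib sum_subtractf)

lemma Lc_eq: "Lc cf1 = Lc cf2 \<Longrightarrow> i < p \<Longrightarrow> j < p \<Longrightarrow> l < p \<Longrightarrow> cf1 i j l = cf2 i j l"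
  using indep[of "\<lambda>i j l. cf1 i j l - cf2 i j l" i j l] Lc_diff[of cf1 cf2] by simp

lemma p_pos: "p > 0" using p_gt by simp

lemma nontriv: "(1::'a) \<noteq> 0"
proof
  assume "(1::'a) = 0"
  then have "\<And>x::'a. x = 0" by (metis mult_1_right mult_zero_right)
  then have "Lc (\<lambda>_ _ _. 1) = 0" by blast
  then have "(1::'k) = 0" using indep[of "\<lambda>_ _ _. 1" 0 0 0] p_pos by blast
  then show False by simp
qed

lemma sc_inj: "sc x = 0 \<Longrightarrow> x = 0"
  using sc_mult_zero[of x 1] nontriv by auto

lemma cas_mono: "cas * (f ^ i * h ^ j * e ^ l) = (f ^ i * h ^ j * e ^ l) * cas"
proof -
  have 1: "cas * f ^ i = f ^ i * cas" using power_commuting_commutes[OF cas_f[symmetric]] by simp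
  have 2: "cas * h ^ j = h ^ j * cas" using power_commuting_commutes[OF cas_h[symmetric]] by simp
  have 3: "cas * e ^ l = e ^ l * cas" using power_commuting_commutes[OF cas_e[symmetric]] by simp
  show ?thesis
    by (simp add: mult.assoc[symmetric] 1) (simp add: mult.assoc 2 3)
qed

lemma cas_central: "cas * x = x * cas"
proof -
  obtain cf where x: "x = Lc cf" using span by blast
  show ?thesis unfolding x Lc_def
    by (simp add: sum_distrib_left sum_distrib_right sc_left_comm cas_mono[simplified mult.assoc] mult.assoc)
qed

lemma pcas_central: "peval sc q cas * x = x * peval sc q cas"
  using peval_commute[of x cas q] cas_central by simp

end

context sl2
begin

lemma prime_char: "prime CHAR('k)" using charp prime_p by simp

lemma frob: "(x + y :: 'k) ^ p = x ^ p + y ^ p"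
  using freshmans_dream[OF prime_char charp[symmetric]] by simp

lemma frob_diff: "(x - y :: 'k) ^ p = x ^ p - y ^ p"
  using frob[of "x - y" y] by simp

lemma frob_nat: "(of_nat n :: 'k) ^ p = of_nat n"
proof (induction n)
  case 0 then show ?case using p_pos by simp
next
  case (Suc n)
  have "(of_nat (Suc n)::'k) ^ p = (of_nat n + 1) ^ p" by (simp add: add.commute)
  also have "\<dots> = of_nat n ^ p + 1 ^ p" by (rule frob)
  also have "\<dots> = of_nat (Suc n)" using Suc by simp
  finally show ?case .
qed

lemma of_nat_inj_p: "i < p \<Longrightarrow> j < p \<Longrightarrow> (of_nat i :: 'k) = of_nat j \<Longrightarrow> i = j"
  using of_nat_eq_iff_cong_CHAR[of i j] charp cong_less_modulus_unique_nat by auto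

lemma of_nat_mod_p: "(of_nat (n mod p) :: 'k) = of_nat n"
  using of_nat_eq_iff_cong_CHAR[where 'a='k, of "n mod p" n] charp by (simp add: cong_def)

lemma of_nat_p: "(of_nat p :: 'k) = 0" using charp of_nat_CHAR by metis

lemma two_ne0: "(2 :: 'k) \<noteq> 0"
proof
  assume "(2::'k) = 0"
  then have "(of_nat 2 :: 'k) = 0" by simp
  then have "p dvd 2" using of_nat_eq_0_iff_char_dvd charp by metis
  then show False using p_gt by (simp add: nat_dvd_not_less)
qed

lemma Fp: assumes "(y::'k) ^ p = y" shows "\<exists>n<p. y = of_nat n"
proof -
  define P :: "'k poly" where "P = monom 1 p + [:0, -1:]"
  have degP: "degree P = p"
    unfolding P_def using p_gt by (subst degree_add_eq_left) (auto simp: degree_monom_eq)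
  then have "P \<noteq> 0" using p_gt by auto
  have polyP: "poly P z = z ^ p - z" for z by (simp add: P_def poly_monom)
  define S where "S = {z. poly P z = 0}"
  have finS: "finite S" unfolding S_def using \<open>P \<noteq> 0\<close> poly_roots_finite by blast
  have cardS: "card S \<le> p" unfolding S_def using card_poly_roots_bound[OF \<open>P \<noteq> 0\<close>] degP by simp
  define T where "T = (of_nat :: nat \<Rightarrow> 'k) ` {..<p}"
  have injT: "inj_on (of_nat :: nat \<Rightarrow> 'k) {..<p}"
    by (rule inj_onI) (auto intro: of_nat_inj_p)
  have cardT: "card T = p" unfolding T_def using card_image[OF injT] by simp
  have TS: "T \<subseteq> S" unfolding T_def S_def by (auto simp: polyP frob_nat)
  have "T = S" using card_subset_eq[OF finS TS] cardT cardS
    by (metis TS card_mono finS le_antisym)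
  moreover have "y \<in> S" unfolding S_def using assms by (simp add: polyP)
  ultimately show ?thesis unfolding T_def by auto
qed

lemma root_shift:
  assumes "r ^ p - r = a" "l ^ p - l = a"
  shows "\<exists>j<p. r = l + of_nat j"
proof -
  have "(r - l) ^ p = r - l" using assms by (simp add: frob_diff algebra_simps)
  then obtain j where "j < p" "r - l = of_nat j" using Fp by blast
  then show ?thesis by (intro exI[of _ j]) (auto simp: algebra_simps)
qed

lemma root_plus_nat:
  assumes "l ^ p - l = a" shows "(l + of_nat j) ^ p - (l + of_nat j) = a"
  using assms by (simp add: frob frob_nat)

definition Ppoly :: "'k poly" where "Ppoly = monom 1 p + [:- a, -1:]"

lemma degP: "degree Ppoly = p"
  unfolding Ppoly_def using p_gt by (subst degree_add_eq_left) (auto simp: degree_monom_eq)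

lemma P_nz: "Ppoly \<noteq> 0" using degP p_gt by auto

lemma poly_P: "poly Ppoly z = z ^ p - z - a"
  by (simp add: Ppoly_def poly_monom)

lemma peval_P: "peval sc Ppoly h = 0"
  using hp by (simp add: Ppoly_def peval_add peval_monom peval_pCons sc_minus algebra_simps)

lemma e_h2: "e * h = (h - 2) * e"
  using eh by (simp add: algebra_simps mult_2)

lemma e_peval: "e * peval sc q h = peval sc q (h - 2) * e"
  by (rule peval_intertwine[OF e_h2])

lemma drop_poly:
  assumes M: "left_ideal M" and w: "w \<notin> M" "e * w \<in> M"
  shows "Q \<noteq> 0 \<Longrightarrow> peval sc Q h * w \<in> M \<Longrightarrow>
    \<exists>r w'. poly Q r = 0 \<and> w' \<notin> M \<and> e * w' \<in> M \<and> h * w' - sc r * w' \<in> M"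
proof (induction "degree Q" arbitrary: Q rule: less_induct)
  case (less Q)
  show ?case
  proof (cases "degree Q = 0")
    case True
    then obtain c where Qc: "Q = [:c:]" by (metis degree_eq_zeroE)
    then have "c \<noteq> 0" using less by auto
    have "sc c * w \<in> M" using less Qc by simp
    then have "sc (inverse c) * (sc c * w) \<in> M" using M li_mult by blast
    then have "w \<in> M" using sc_inv_cancel[OF \<open>c \<noteq> 0\<close>] by simp
    then show ?thesis using w by blast
  next
    case False
    then obtain r where r: "poly Q r = 0" using algc unfolding alg_closed_def by auto
    then obtain Q1 where Q1: "Q = [:-r, 1:] * Q1" using poly_eq_0_iff_dvd by (metis dvdE)
    have "Q1 \<noteq> 0" using less Q1 by auto
    have degQ1: "degree Q1 < degree Q"
    proof -
      have "degree Q = degree [:-r, 1:] + degree Q1"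
        unfolding Q1 using \<open>Q1 \<noteq> 0\<close> by (intro degree_mult_eq) auto
      then show ?thesis by simp
    qed
    show ?thesis
    proof (cases "peval sc Q1 h * w \<in> M")
      case True
      from less(1)[OF degQ1 \<open>Q1 \<noteq> 0\<close> True] obtain r' w' where
        "poly Q1 r' = 0" "w' \<notin> M" "e * w' \<in> M" "h * w' - sc r' * w' \<in> M" by blast
      then show ?thesis using Q1 by (intro exI[of _ r'] exI[of _ w']) simp
    next
      case False
      define w1 where "w1 = peval sc Q1 h * w"
      have "h * w1 - sc r * w1 = peval sc Q h * w"
        unfolding w1_def Q1 peval_mult by (simp add: sc_minus algebra_simps)
      moreover have "e * w1 = peval sc Q1 (h - 2) * (e * w)"
        unfolding w1_def by (simp add: mult.assoc[symmetric] e_peval)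
      ultimately show ?thesis using False less(3) w(2) M li_mult unfolding w1_def
        by (intro exI[of _ r] exI[of _ w1]) (auto simp: r w1_def)
    qed
  qed
qed

lemma hw_exists:
  assumes M: "max_left_ideal M"
  shows "\<exists>u r. u \<notin> M \<and> e * u \<in> M \<and> h * u - sc r * u \<in> M \<and> r ^ p - r = a"
proof -
  have LM: "left_ideal M" and one: "1 \<notin> M" using M max_li max_1 by auto
  have ex: "\<exists>n. e ^ n \<in> M" using ep li_0[OF LM] by metis
  define n where "n = (LEAST n. e ^ n \<in> M)"
  have n1: "e ^ n \<in> M" unfolding n_def using LeastI_ex[OF ex] .
  have n0: "n \<noteq> 0" using n1 one by (metis power_0)
  have n2: "e ^ (n - 1) \<notin> M" unfolding n_def using not_less_Least n0 n_def by (metis diff_less less_one neq0_conv)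
  have n3: "e * e ^ (n - 1) \<in> M" using n1 n0 by (metis One_nat_def Suc_pred neq0_conv power_Suc)
  have "peval sc Ppoly h * e ^ (n - 1) \<in> M" using peval_P li_0[OF LM] by simp
  from drop_poly[OF LM n2 n3 P_nz this] obtain r u where
    "poly Ppoly r = 0" "u \<notin> M" "e * u \<in> M" "h * u - sc r * u \<in> M" by blast
  then show ?thesis by (intro exI[of _ u] exI[of _ r]) (simp add: poly_P)
qed

lemma scalar_hw:
  assumes M: "left_ideal M" and u: "u \<notin> M" "e * u \<in> M" "h * u - sc r * u \<in> M"
    and c: "cas - sc \<alpha> \<in> M"
  shows "\<alpha> = (r + 1) ^ 2"
proof (rule ccontr)
  assume ne: "\<alpha> \<noteq> (r + 1) ^ 2"
  have A: "(h + 1) * u - sc (r + 1) * u \<in> M" using u(3) by (simp add: sc_add algebra_simps)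
  have B: "(h + 1) * ((h + 1) * u) - sc ((r + 1) ^ 2) * u \<in> M"
  proof -
    have "(h + 1) * ((h + 1) * u) - sc ((r + 1) ^ 2) * u
        = (h + 1) * ((h + 1) * u - sc (r + 1) * u) + sc (r + 1) * ((h + 1) * u - sc (r + 1) * u)"
    proof -
      have 1: "(h + 1) * (sc (r + 1) * u) = sc (r + 1) * ((h + 1) * u)" by (rule sc_left_comm)
      have 2: "sc (r + 1) * (sc (r + 1) * u) = sc ((r + 1) ^ 2) * u"
        by (simp add: power2_eq_square sc_mult mult.assoc)
      show ?thesis by (simp add: right_diff_distrib distrib_left 1 2)
    qed
    also have "\<dots> \<in> M" using A M li_mult li_add by blast
    finally show ?thesis .
  qed
  have C: "(f * e + f * e + f * e + f * e) * u \<in> M"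
  proof -
    have "f * (e * u) \<in> M" using u(2) M li_mult by blast
    then show ?thesis using M by (simp add: distrib_right mult.assoc li_add)
  qed
  have D: "cas * u - sc ((r + 1) ^ 2) * u \<in> M"
  proof -
    have "cas * u - sc ((r + 1) ^ 2) * u = ((h + 1) * ((h + 1) * u) - sc ((r + 1) ^ 2) * u)
         + (f * e + f * e + f * e + f * e) * u"
      unfolding cas_alt by (simp add: algebra_simps)
    then show ?thesis using B C M li_add by metis
  qed
  have E: "cas * u - sc \<alpha> * u \<in> M"
  proof -
    have "u * (cas - sc \<alpha>) \<in> M" using c M li_mult by blast
    moreover have "u * (cas - sc \<alpha>) = cas * u - sc \<alpha> * u"
      by (simp only: right_diff_distrib left_diff_distrib cas_central[of u] sc_comm[of \<alpha> u])
    ultimately show ?thesis by simp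
  qed
  have "sc ((r + 1) ^ 2 - \<alpha>) * u \<in> M"
  proof -
    have "sc ((r + 1) ^ 2 - \<alpha>) * u = (cas * u - sc \<alpha> * u) - (cas * u - sc ((r + 1) ^ 2) * u)"
      by (simp add: sc_diff algebra_simps)
    then show ?thesis using D E M li_diff by metis
  qed
  then have "sc (inverse ((r + 1) ^ 2 - \<alpha>)) * (sc ((r + 1) ^ 2 - \<alpha>) * u) \<in> M" using M li_mult by blast
  then have "u \<in> M" using sc_inv_cancel ne by (metis eq_iff_diff_eq_0)
  then show False using u by blast
qed

end

context sl2
begin

lemma he: "h * e = e * h + sc 2 * e" using rel_he by (simp add: algebra_simps)

lemma sc_scmult: "sc c * (sc d * x) = sc (c * d) * x"
  by (simp add: sc_mult mult.assoc)

lemma h_epow: "h * e ^ k = e ^ k * h + sc (2 * of_nat k) * e ^ k"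
proof (induction k)
  case 0 then show ?case by simp
next
  case (Suc k)
  have "h * e ^ Suc k = (h * e ^ k) * e" by (simp only: power_Suc2 mult.assoc)
  also have "\<dots> = e ^ k * (h * e) + sc (2 * of_nat k) * e ^ Suc k"
    using Suc by (simp add: distrib_right mult.assoc power_Suc2 power_commutes)
  also have "e ^ k * (h * e) = e ^ Suc k * h + sc 2 * e ^ Suc k"
  proof -
    have "e ^ k * (h * e) = (e ^ k * e) * h + sc 2 * (e ^ k * e)"
      unfolding he distrib_left sc_left_comm[of "e ^ k" 2 e] by (simp only: mult.assoc)
    then show ?thesis by (simp only: power_Suc2[symmetric])
  qed
  finally have X: "h * e ^ Suc k = e ^ Suc k * h + sc 2 * e ^ Suc k + sc (2 * of_nat k) * e ^ Suc k" .
  have "(2 * of_nat (Suc k) :: 'k) = 2 + 2 * of_nat k" by (simp add: algebra_simps)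
  then have Y: "sc (2 * of_nat (Suc k)) * e ^ Suc k = sc 2 * e ^ Suc k + sc (2 * of_nat k) * e ^ Suc k"
    by (simp only: sc_add distrib_right)
  show ?case unfolding X Y by (simp only: add.assoc)
qed

lemma h_ek_vec:
  assumes "h * y = sc r * y"
  shows "h * (e ^ k * y) = sc (r + 2 * of_nat k) * (e ^ k * y)"
proof -
  have "h * (e ^ k * y) = e ^ k * (h * y) + sc (2 * of_nat k) * (e ^ k * y)"
    by (simp add: mult.assoc[symmetric] h_epow distrib_right)
  also have "e ^ k * (h * y) = sc r * (e ^ k * y)"
    unfolding assms by (rule sc_left_comm)
  finally show ?thesis by (simp add: sc_add distrib_right)
qed

lemma cas_hw:
  assumes "h * v = sc s * v"
  shows "cas * v - sc ((s + 1) ^ 2) * v = 4 * (f * (e * v))"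
proof -
  have 1: "(h + 1) * v = sc (s + 1) * v" using assms by (simp add: sc_add distrib_right)
  have "(h + 1) * ((h + 1) * v) = (h + 1) * (sc (s + 1) * v)" by (simp only: 1)
  also have "\<dots> = sc (s + 1) * ((h + 1) * v)" by (rule sc_left_comm)
  also have "\<dots> = sc (s + 1) * (sc (s + 1) * v)" by (simp only: 1)
  also have "\<dots> = sc ((s + 1) ^ 2) * v" by (simp add: sc_scmult power2_eq_square)
  finally have 2: "(h + 1) * ((h + 1) * v) = sc ((s + 1) ^ 2) * v" .
  have 3: "cas * v = (h + 1) * ((h + 1) * v) + (f * e + f * e + f * e + f * e) * v"
    unfolding cas_alt by (simp only: distrib_right mult.assoc)
  have 4: "(f * e + f * e + f * e + f * e) * v = 4 * (f * (e * v))"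
    by (simp only: four distrib_right mult.assoc)
  show ?thesis unfolding 3 4 2 by simp
qed

definition Rr :: "'k \<Rightarrow> 'k poly" where
  "Rr r = (\<Prod>m<p. [:- ((r + 1 + 2 * of_nat m) ^ 2), 1:])"

lemma cas_sc_comm: "(cas - sc b) * x = x * (cas - sc b)"
  by (simp add: left_diff_distrib right_diff_distrib cas_central sc_comm[of b x])

lemma wv_kill_aux:
  assumes "h * y = sc r * y"
  shows "\<exists>z. peval sc (\<Prod>m<k. [:- ((r + 1 + 2 * of_nat m) ^ 2), 1:]) cas * y = z * (e ^ k * y)"
proof (induction k)
  case 0 then show ?case by (intro exI[of _ 1]) simp
next
  case (Suc k)
  then obtain z where z: "peval sc (\<Prod>m<k. [:- ((r + 1 + 2 * of_nat m) ^ 2), 1:]) cas * y = z * (e ^ k * y)"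
    by blast
  define \<beta> where "\<beta> = (r + 1 + 2 * of_nat k) ^ 2"
  define A where "A = peval sc (\<Prod>m<k. [:- ((r + 1 + 2 * of_nat m) ^ 2), 1:]) cas"
  have hk: "h * (e ^ k * y) = sc (r + 2 * of_nat k) * (e ^ k * y)" by (rule h_ek_vec[OF assms])
  have cv: "(cas - sc \<beta>) * (e ^ k * y) = 4 * (f * (e * (e ^ k * y)))"
  proof -
    have eq: "(r + 2 * of_nat k + 1) ^ 2 = \<beta>" unfolding \<beta>_def by (simp add: add_ac)
    show ?thesis using cas_hw[OF hk, unfolded eq] by (simp add: left_diff_distrib)
  qed
  have "peval sc (\<Prod>m<Suc k. [:- ((r + 1 + 2 * of_nat m) ^ 2), 1:]) cas = A * (sc (- \<beta>) + cas)"
    by (simp only: prod.lessThan_Suc peval_mult peval_X A_def \<beta>_def)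
  also have "\<dots> = A * (cas - sc \<beta>)" by (simp add: sc_minus)
  also have "\<dots> = (cas - sc \<beta>) * A" by (rule cas_sc_comm[symmetric])
  finally have "peval sc (\<Prod>m<Suc k. [:- ((r + 1 + 2 * of_nat m) ^ 2), 1:]) cas * y
      = (cas - sc \<beta>) * (A * y)" by (simp add: mult.assoc)
  also have "\<dots> = (cas - sc \<beta>) * (z * (e ^ k * y))" using z by (simp add: A_def)
  also have "\<dots> = z * ((cas - sc \<beta>) * (e ^ k * y))"
    by (simp add: mult.assoc[symmetric] cas_sc_comm[of \<beta> z])
  also have "\<dots> = z * (4 * (f * (e * (e ^ k * y))))" using cv by simp
  also have "\<dots> = (z * 4 * f) * (e ^ Suc k * y)" by (simp add: mult.assoc)
  finally show ?case by blast
qed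

lemma wv_kill:
  assumes "h * y = sc r * y"
  shows "peval sc (Rr r) cas * y = 0"
  using wv_kill_aux[OF assms, of p] ep unfolding Rr_def by auto

end

context sl2
begin

lemma root_exists: "\<exists>l. l ^ p - l = a"
proof -
  have "degree Ppoly > 0" using degP p_gt by simp
  then obtain l where "poly Ppoly l = 0" using algc unfolding alg_closed_def by blast
  then show ?thesis by (auto simp: poly_P)
qed

definition lam0 :: 'k where "lam0 = (SOME l. l ^ p - l = a)"

lemma lam0: "lam0 ^ p - lam0 = a"
  unfolding lam0_def using someI_ex[OF root_exists] .

definition rts :: "nat \<Rightarrow> 'k" where "rts j = lam0 + of_nat j"

lemma rts_root: "rts j ^ p - rts j = a" unfolding rts_def by (rule root_plus_nat[OF lam0])

lemma rts_inj: "i < p \<Longrightarrow> j < p \<Longrightarrow> rts i = rts j \<Longrightarrow> i = j"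
  unfolding rts_def using of_nat_inj_p by simp

lemma root_is_rts: "r ^ p - r = a \<Longrightarrow> \<exists>j<p. r = rts j"
  unfolding rts_def using root_shift[OF _ lam0] by blast

definition R0 :: "'k poly" where "R0 = (\<Prod>i<p. [:- ((lam0 + 1 + of_nat i) ^ 2), 1:])"

lemma Rr_rts: "Rr (rts j) = R0"
proof -
  define \<sigma> where "\<sigma> m = (j + 2 * m) mod p" for m
  define g where "g i = [:- ((lam0 + 1 + of_nat i) ^ 2), 1:]" for i
  have inj: "inj_on \<sigma> {..<p}"
  proof (rule inj_onI)
    fix m m' assume m: "m \<in> {..<p}" "m' \<in> {..<p}" "\<sigma> m = \<sigma> m'"
    then have "(of_nat (\<sigma> m) :: 'k) = of_nat (\<sigma> m')" by simp
    then have "(of_nat j + 2 * of_nat m :: 'k) = of_nat j + 2 * of_nat m'"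
      unfolding \<sigma>_def of_nat_mod_p by simp
    then have "(2::'k) * (of_nat m - of_nat m') = 0" by (simp add: algebra_simps)
    then have "(of_nat m :: 'k) = of_nat m'" using two_ne0 by simp
    then show "m = m'" using m of_nat_inj_p by auto
  qed
  have img: "\<sigma> ` {..<p} = {..<p}"
    by (rule endo_inj_surj[OF _ _ inj]) (auto simp: \<sigma>_def p_pos)
  have "R0 = prod g (\<sigma> ` {..<p})" unfolding img R0_def g_def ..
  also have "\<dots> = prod (g \<circ> \<sigma>) {..<p}" by (rule prod.reindex[OF inj])
  also have "\<dots> = Rr (rts j)"
    unfolding Rr_def
  proof (rule prod.cong)
    fix m assume "m \<in> {..<p}"
    have eqm: "(lam0 + 1 + of_nat (\<sigma> m) :: 'k) = rts j + 1 + 2 * of_nat m"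
      unfolding \<sigma>_def of_nat_mod_p rts_def by simp
    show "(g \<circ> \<sigma>) m = [:- ((rts j + 1 + 2 * of_nat m) ^ 2), 1:]"
      unfolding comp_def g_def eqm ..
  qed simp
  finally show ?thesis by simp
qed

definition Qj :: "nat \<Rightarrow> 'k poly" where "Qj j = Ppoly div [:- rts j, 1:]"

lemma P_root_rts: "poly Ppoly (rts j) = 0"
  using rts_root[of j] by (simp add: poly_P)

lemma PQ: "Ppoly = [:- rts j, 1:] * Qj j"
proof -
  have "[:- rts j, 1:] dvd Ppoly" using P_root_rts poly_eq_0_iff_dvd by blast
  then show ?thesis unfolding Qj_def by (rule sym[OF dvd_mult_div_cancel])
qed

lemma Q_nz: "Qj j \<noteq> 0" using PQ[of j] P_nz by auto

lemma degQ: "degree (Qj j) = p - 1"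
proof -
  have "degree Ppoly = degree [:- rts j, 1:] + degree (Qj j)"
    by (subst PQ[of j]) (rule degree_mult_eq, simp, rule Q_nz)
  then show ?thesis using degP by simp
qed

lemma Q_other: "i < p \<Longrightarrow> j < p \<Longrightarrow> i \<noteq> j \<Longrightarrow> poly (Qj j) (rts i) = 0"
proof -
  assume ij: "i < p" "j < p" "i \<noteq> j"
  have "0 = poly Ppoly (rts i)" using P_root_rts by simp
  also have "\<dots> = (rts i - rts j) * poly (Qj j) (rts i)" by (subst PQ[of j]) (simp add: algebra_simps)
  finally show ?thesis using rts_inj ij by auto
qed

lemma pderiv_P: "pderiv Ppoly = [:-1:]"
  unfolding Ppoly_def by (simp add: pderiv_add pderiv_monom of_nat_p pderiv_pCons)

lemma Q_same: "poly (Qj j) (rts j) = -1"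
proof -
  have "pderiv Ppoly = [:- rts j, 1:] * pderiv (Qj j) + Qj j * pderiv [:- rts j, 1:]"
    by (subst PQ[of j]) (rule pderiv_mult)
  then have "poly (pderiv Ppoly) (rts j) = poly (Qj j) (rts j)"
    by (simp add: pderiv_pCons)
  then show ?thesis using pderiv_P by simp
qed

lemma sumQ: "(\<Sum>j<p. Qj j) = -1"
proof (rule poly_eqI_degree[where A = "rts ` {..<p}"])
  have injr: "inj_on rts {..<p}" by (rule inj_onI) (auto intro: rts_inj)
  have card: "card (rts ` {..<p}) = p" using card_image[OF injr] by simp
  fix x assume "x \<in> rts ` {..<p}"
  then obtain i where i: "i < p" "x = rts i" by auto
  have "poly (\<Sum>j<p. Qj j) x = (\<Sum>j<p. poly (Qj j) (rts i))" by (simp add: poly_sum i)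
  also have "\<dots> = (\<Sum>j<p. if j = i then -1 else 0)"
    by (rule sum.cong) (auto simp: Q_same Q_other i)
  also have "\<dots> = -1" using i by simp
  finally show "poly (\<Sum>j<p. Qj j) x = poly (-1) x" by simp
next
  have injr: "inj_on rts {..<p}" by (rule inj_onI) (auto intro: rts_inj)
  have card: "card (rts ` {..<p}) = p" using card_image[OF injr] by simp
  have "degree (\<Sum>j<p. Qj j) \<le> p - 1" by (rule degree_sum_le) (auto simp: degQ)
  then show "degree (\<Sum>j<p. Qj j) < card (rts ` {..<p})" using card p_pos by linarith
  show "degree (-1 :: 'k poly) < card (rts ` {..<p})" using card p_pos by simp
qed

lemma weightQ: "h * peval sc (Qj j) h = sc (rts j) * peval sc (Qj j) h"
proof -
  have "0 = peval sc Ppoly h" using peval_P by simp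
  also have "\<dots> = (sc (- rts j) + h) * peval sc (Qj j) h"
    by (subst PQ[of j]) (simp only: peval_mult peval_X)
  finally show ?thesis by (simp add: sc_minus algebra_simps)
qed

lemma R0_zero: "peval sc R0 cas = 0"
proof -
  have one: "(1::'a) = - (\<Sum>j<p. peval sc (Qj j) h)"
    using arg_cong[OF sumQ, of "\<lambda>q. peval sc q h"] by (simp add: peval_sum peval_minus)
  have "peval sc R0 cas = peval sc R0 cas * 1" by simp
  also have "\<dots> = - (\<Sum>j<p. peval sc R0 cas * peval sc (Qj j) h)"
    by (subst one) (simp add: sum_distrib_left)
  also have "\<dots> = 0"
  proof -
    have "peval sc R0 cas * peval sc (Qj j) h = 0" for j
      using wv_kill[OF weightQ[of j]] Rr_rts[of j] by simp
    then show ?thesis by simp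
  qed
  finally show ?thesis .
qed

end

lemma central_mult: "central x \<Longrightarrow> central y \<Longrightarrow> central (x * y)"
  unfolding central_def by (metis mult.assoc)

lemma ring_id1: "((u::'b::comm_ring_1) * X ^ k + v * S) * (u1 * X + v1 * S)
   = (u * u1) * X ^ Suc k + (u * X ^ k * v1 + v * u1 * X + v * v1 * S) * S"
  by (simp add: algebra_simps)

lemma ring_id2: "(u::'b::comm_ring_1) * X ^ k + v * S = 1 \<Longrightarrow> (v * S) * (v * S) = v * S - (u * v) * (X ^ k * S)"
proof -
  assume "u * X ^ k + v * S = 1"
  then have E: "v * S = 1 - u * X ^ k" by (simp add: algebra_simps)
  have "(v * S) * (v * S) = (v * S) * (1 - u * X ^ k)" by (subst (2) E) (rule refl)
  also have "\<dots> = v * S - (u * v) * (X ^ k * S)" by (simp add: algebra_simps)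
  finally show ?thesis .
qed

context sl2
begin

lemma lin_decomp: "\<exists>r. (q::'k poly) = [:poly q \<alpha>:] + [:- \<alpha>, 1:] * r"
proof -
  have "poly (q - [:poly q \<alpha>:]) \<alpha> = 0" by simp
  then have "[:- \<alpha>, 1:] dvd q - [:poly q \<alpha>:]" using poly_eq_0_iff_dvd by blast
  then obtain r where "q - [:poly q \<alpha>:] = [:- \<alpha>, 1:] * r" by (elim dvdE)
  then show ?thesis by (intro exI[of _ r]) (simp add: algebra_simps)
qed

lemma peval_lin: "peval sc ([:- \<alpha>, 1:] * r) cas = peval sc r cas * (cas - sc \<alpha>)"
proof -
  have "peval sc ([:- \<alpha>, 1:] * r) cas = (sc (- \<alpha>) + cas) * peval sc r cas"
    by (simp only: peval_mult peval_X)
  also have "\<dots> = (cas - sc \<alpha>) * peval sc r cas" by (simp add: sc_minus)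
  also have "\<dots> = peval sc r cas * (cas - sc \<alpha>)" by (rule cas_sc_comm)
  finally show ?thesis .
qed

lemma peval_mod_M:
  assumes M: "left_ideal M" and c: "cas - sc \<alpha> \<in> M"
  shows "peval sc q cas - sc (poly q \<alpha>) \<in> M"
proof -
  obtain r where r: "q = [:poly q \<alpha>:] + [:- \<alpha>, 1:] * r" using lin_decomp by blast
  have "peval sc q cas - sc (poly q \<alpha>) = peval sc r cas * (cas - sc \<alpha>)"
    by (subst (1) r) (simp only: peval_add peval_const peval_lin add_diff_cancel_left')
  then show ?thesis using M c li_mult by metis
qed

lemma eval_principle:
  assumes M: "left_ideal M" "1 \<notin> M" and pi: "1 - \<pi> \<in> M" "central \<pi>"
    and c: "cas - sc \<alpha> \<in> M" and z: "\<pi> * peval sc q cas = 0"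
  shows "poly q \<alpha> = 0"
proof (rule ccontr)
  assume ne: "poly q \<alpha> \<noteq> 0"
  define X where "X = peval sc q cas - sc (poly q \<alpha>)"
  have X: "X \<in> M" unfolding X_def by (rule peval_mod_M[OF M(1) c])
  have "sc (poly q \<alpha>) = \<pi> * peval sc q cas - \<pi> * X + sc (poly q \<alpha>) * (1 - \<pi>)"
    unfolding X_def by (simp add: algebra_simps sc_comm[of _ \<pi>])
  also have "\<dots> \<in> M" unfolding z using X pi M(1) li_mult li_add li_diff li_0 by (metis diff_0)
  finally have "sc (inverse (poly q \<alpha>)) * sc (poly q \<alpha>) \<in> M" using M(1) li_mult by blast
  then have "1 \<in> M" using ne by (simp flip: sc_mult)
  then show False using M by blast
qed

lemma bezout_lin:
  assumes S: "poly S \<alpha> \<noteq> 0"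
  shows "\<exists>u v. u * [:- \<alpha>, 1:] ^ k + v * S = (1 :: 'k poly)"
proof (induction k)
  case 0 then show ?case by (intro exI[of _ 1] exI[of _ 0]) simp
next
  case (Suc k)
  then obtain u v where uv: "u * [:- \<alpha>, 1:] ^ k + v * S = 1" by blast
  obtain r where r: "S = [:poly S \<alpha>:] + [:- \<alpha>, 1:] * r" using lin_decomp by blast
  define c where "c = poly S \<alpha>"
  define u1 where "u1 = - smult (inverse c) r"
  define v1 where "v1 = [:inverse c:]"
  have uv1: "u1 * [:- \<alpha>, 1:] + v1 * S = 1"
  proof -
    have "v1 * S = [:inverse c * c:] + smult (inverse c) ([:- \<alpha>, 1:] * r)"
      unfolding v1_def c_def by (subst (1) r) (simp add: distrib_left)
    then show ?thesis using S unfolding u1_def c_def by (simp add: algebra_simps)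
  qed
  have "(u * [:- \<alpha>, 1:] ^ k + v * S) * (u1 * [:- \<alpha>, 1:] + v1 * S) = 1" using uv uv1 by simp
  then have "(u * u1) * [:- \<alpha>, 1:] ^ Suc k
      + (u * [:- \<alpha>, 1:] ^ k * v1 + v * u1 * [:- \<alpha>, 1:] + v * v1 * S) * S = 1"
    by (simp only: ring_id1)
  then show ?case by blast
qed

lemma block_pow:
  assumes pci: "prim_central_idem \<pi>" and M: "left_ideal M" "1 \<notin> M" and pi1: "1 - \<pi> \<in> M"
    and c: "cas - sc \<alpha> \<in> M" and R: "peval sc R cas = 0"
    and fac: "R = [:- \<alpha>, 1:] ^ k * S" and S: "poly S \<alpha> \<noteq> 0"
  shows "\<pi> * peval sc ([:- \<alpha>, 1:] ^ k) cas = 0"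
proof -
  have pi: "\<pi> \<noteq> 0" "\<pi> * \<pi> = \<pi>" "central \<pi>"
    and prim: "\<And>\<epsilon>. central \<epsilon> \<and> \<epsilon> * \<epsilon> = \<epsilon> \<and> \<epsilon> * \<pi> = \<epsilon> \<longrightarrow> \<epsilon> = 0 \<or> \<epsilon> = \<pi>"
    using pci unfolding prim_central_idem_def by auto
  have "poly R \<alpha> = 0"
    using eval_principle[OF M pi1 pi(3) c] R by simp
  then have k: "k > 0" using fac S by (cases k) auto
  obtain u v where uv: "u * [:- \<alpha>, 1:] ^ k + v * S = 1"
    using bezout_lin[OF S] by blast
  define \<epsilon> where "\<epsilon> = peval sc (v * S) cas"
  have epc: "central \<epsilon>" unfolding central_def \<epsilon>_def using pcas_central by blast
  have vSvS: "(v * S) * (v * S) = v * S - (u * v) * R"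
    unfolding fac by (rule ring_id2[OF uv])
  have epid: "\<epsilon> * \<epsilon> = \<epsilon>"
    unfolding \<epsilon>_def peval_mult[symmetric] vSvS by (simp add: peval_diff peval_mult R)
  define \<delta> where "\<delta> = \<pi> * \<epsilon>"
  have dc: "central \<delta>" unfolding \<delta>_def using pi(3) epc by (rule central_mult)
  have comm: "\<epsilon> * \<pi> = \<pi> * \<epsilon>" using epc unfolding central_def by blast
  have did: "\<delta> * \<delta> = \<delta>"
    unfolding \<delta>_def by (metis mult.assoc comm pi(2) epid)
  have dpi: "\<delta> * \<pi> = \<delta>"
    unfolding \<delta>_def by (metis mult.assoc comm pi(2))
  from prim[of \<delta>] dc did dpi have "\<delta> = 0 \<or> \<delta> = \<pi>" by blast
  then show ?thesis
  proof
    assume "\<delta> = 0"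
    then have "poly (v * S) \<alpha> = 0"
      using eval_principle[OF M pi1 pi(3) c] unfolding \<delta>_def \<epsilon>_def by blast
    moreover have "poly (u * [:- \<alpha>, 1:] ^ k + v * S) \<alpha> = 1" using uv by simp
    ultimately show ?thesis using k by (auto simp: power_0_left)
  next
    assume d: "\<delta> = \<pi>"
    have "\<pi> * peval sc ([:- \<alpha>, 1:] ^ k) cas = \<pi> * \<epsilon> * peval sc ([:- \<alpha>, 1:] ^ k) cas"
      using d unfolding \<delta>_def by simp
    also have "\<dots> = \<pi> * peval sc (v * R) cas"
      unfolding \<epsilon>_def fac by (simp add: mult.assoc peval_mult[symmetric] algebra_simps)
    also have "\<dots> = 0" by (simp add: peval_mult R)
    finally show ?thesis .
  qed
qed

lemma kernel1:
  assumes M: "left_ideal M" "1 \<notin> M" and pi: "1 - \<pi> \<in> M" "central \<pi>"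
    and c: "cas - sc \<alpha> \<in> M" and z: "\<pi> * (cas - sc \<alpha>) = 0"
  shows "coinv_kernel sc cas \<pi> = {q. [:- \<alpha>, 1:] dvd q}"
proof (intro set_eqI iffI)
  fix q assume "q \<in> coinv_kernel sc cas \<pi>"
  then have "poly q \<alpha> = 0" using eval_principle[OF M pi c] by (simp add: coinv_kernel_def)
  then show "q \<in> {q. [:- \<alpha>, 1:] dvd q}" using poly_eq_0_iff_dvd by blast
next
  fix q assume "q \<in> {q. [:- \<alpha>, 1:] dvd q}"
  then obtain r where qr: "q = [:- \<alpha>, 1:] * r" by (auto elim: dvdE)
  have "\<pi> * peval sc q cas = \<pi> * (peval sc r cas * (cas - sc \<alpha>))"
    by (simp only: qr peval_lin)
  also have "\<dots> = \<pi> * (cas - sc \<alpha>) * peval sc r cas"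
    by (simp only: cas_sc_comm[of \<alpha> "peval sc r cas"] mult.assoc)
  finally have "\<pi> * peval sc q cas = \<pi> * (cas - sc \<alpha>) * peval sc r cas" .
  then show "q \<in> coinv_kernel sc cas \<pi>" using z by (simp add: coinv_kernel_def)
qed

lemma kernel2:
  assumes M: "left_ideal M" "1 \<notin> M" and pi: "1 - \<pi> \<in> M" "central \<pi>"
    and c: "cas - sc \<alpha> \<in> M" and z: "\<pi> * peval sc ([:- \<alpha>, 1:] ^ 2) cas = 0"
    and nz: "\<pi> * (cas - sc \<alpha>) \<noteq> 0"
  shows "coinv_kernel sc cas \<pi> = {q. [:- \<alpha>, 1:] ^ 2 dvd q}"
proof (intro set_eqI iffI)
  fix q assume "q \<in> coinv_kernel sc cas \<pi>"
  then have zq: "\<pi> * peval sc q cas = 0" by (simp add: coinv_kernel_def)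
  then have q0: "poly q \<alpha> = 0" using eval_principle[OF M pi c] by simp
  obtain r where r: "q = [:poly q \<alpha>:] + [:- \<alpha>, 1:] * r" using lin_decomp by blast
  obtain r' where r': "r = [:poly r \<alpha>:] + [:- \<alpha>, 1:] * r'" using lin_decomp by blast
  have q1: "q = [:- \<alpha>, 1:] * r" using r q0 by simp
  have "q = [:- \<alpha>, 1:] * [:poly r \<alpha>:] + [:- \<alpha>, 1:] ^ 2 * r'"
    unfolding q1 by (subst r') (simp only: distrib_left power2_eq_square mult.assoc)
  moreover have "[:- \<alpha>, 1:] * [:poly r \<alpha>:] = smult (poly r \<alpha>) [:- \<alpha>, 1:]"
  proof -
    have "[:poly r \<alpha>:] = smult (poly r \<alpha>) 1" by simp
    then show ?thesis by (simp only: mult_smult_right mult_1_right)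
  qed
  ultimately have qq: "q = smult (poly r \<alpha>) [:- \<alpha>, 1:] + [:- \<alpha>, 1:] ^ 2 * r'" by simp
  have "peval sc q cas = sc (poly r \<alpha>) * (sc (- \<alpha>) + cas) + peval sc ([:- \<alpha>, 1:] ^ 2) cas * peval sc r' cas"
    by (subst qq) (simp only: peval_add peval_smult peval_mult peval_X)
  then have "\<pi> * peval sc q cas = \<pi> * (sc (poly r \<alpha>) * (cas - sc \<alpha>)) + \<pi> * peval sc ([:- \<alpha>, 1:] ^ 2) cas * peval sc r' cas"
    by (simp add: sc_minus distrib_left mult.assoc)
  also have "\<pi> * (sc (poly r \<alpha>) * (cas - sc \<alpha>)) = sc (poly r \<alpha>) * (\<pi> * (cas - sc \<alpha>))"
    by (rule sc_left_comm)
  finally have "\<pi> * peval sc q cas = sc (poly r \<alpha>) * (\<pi> * (cas - sc \<alpha>)) + \<pi> * peval sc ([:- \<alpha>, 1:] ^ 2) cas * peval sc r' cas" .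
  then have "sc (poly r \<alpha>) * (\<pi> * (cas - sc \<alpha>)) = 0" using zq z by simp
  then have "poly r \<alpha> = 0" using nz sc_mult_zero by blast
  then show "q \<in> {q. [:- \<alpha>, 1:] ^ 2 dvd q}" using qq by simp
next
  fix q assume "q \<in> {q. [:- \<alpha>, 1:] ^ 2 dvd q}"
  then obtain r where "q = [:- \<alpha>, 1:] ^ 2 * r" by (auto elim: dvdE)
  then have "\<pi> * peval sc q cas = \<pi> * peval sc ([:- \<alpha>, 1:] ^ 2) cas * peval sc r cas"
    by (simp add: peval_mult mult.assoc)
  then show "q \<in> coinv_kernel sc cas \<pi>" using z by (simp add: coinv_kernel_def)
qed

end

context sl2
begin

definition hasLow :: "nat \<Rightarrow> 'a \<Rightarrow> bool" where
  "hasLow L x \<longleftrightarrow> (\<exists>cf. x = Lc cf \<and> (\<forall>i j l. l < L \<longrightarrow> cf i j l = 0))"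

lemma Lc_add: "Lc cf1 + Lc cf2 = Lc (\<lambda>i j l. cf1 i j l + cf2 i j l)"
  unfolding Lc_def by (simp add: sc_add distrib_right sum.distrib)

lemma Lc_smult: "sc c * Lc cf = Lc (\<lambda>i j l. c * cf i j l)"
  unfolding Lc_def by (simp add: sum_distrib_left sc_mult mult.assoc)

lemma Lc_zero: "Lc (\<lambda>_ _ _. 0) = 0" unfolding Lc_def by simp

lemma sum_single: "l < p \<Longrightarrow> (\<Sum>l'<p. sc (if l' = l then X else 0) * B l') = sc X * (B l :: 'a)"
proof -
  assume l: "l < p"
  have "(\<Sum>l'<p. sc (if l' = l then X else 0) * B l') = (\<Sum>l'<p. if l' = l then sc X * B l' else 0)"
    by (intro sum.cong) auto
  also have "\<dots> = sc X * B l" using l by simp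
  finally show ?thesis .
qed

lemma Lc_ind:
  assumes "i < p" "j < p" "l < p"
  shows "Lc (\<lambda>i' j' l'. if i' = i \<and> j' = j \<and> l' = l then 1 else 0) = f ^ i * h ^ j * e ^ l"
proof -
  have 1: "(\<Sum>l'<p. sc (if i' = i \<and> j' = j \<and> l' = l then 1 else 0) * (f ^ i' * h ^ j' * e ^ l'))
     = (if i' = i \<and> j' = j then f ^ i * h ^ j * e ^ l else 0)" for i' j'
  proof (cases "i' = i \<and> j' = j")
    case True
    then have "(\<Sum>l'<p. sc (if i' = i \<and> j' = j \<and> l' = l then 1 else 0) * (f ^ i' * h ^ j' * e ^ l'))
      = (\<Sum>l'<p. sc (if l' = l then 1 else 0) * (f ^ i * h ^ j * e ^ l'))" by simp
    also have "\<dots> = f ^ i * h ^ j * e ^ l" using sum_single[OF assms(3), of 1 "\<lambda>l'. f ^ i * h ^ j * e ^ l'"] by simp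
    finally show ?thesis using True by simp
  next
    case False
    then have "\<And>l'. (if i' = i \<and> j' = j \<and> l' = l then 1 else (0::'k)) = 0" by auto
    then show ?thesis using False by auto
  qed
  have "Lc (\<lambda>i' j' l'. if i' = i \<and> j' = j \<and> l' = l then 1 else 0)
     = (\<Sum>i'<p. \<Sum>j'<p. if i' = i \<and> j' = j then f ^ i * h ^ j * e ^ l else 0)"
    unfolding Lc_def 1 ..
  also have "\<dots> = (\<Sum>i'<p. if i' = i then f ^ i * h ^ j * e ^ l else 0)"
  proof (intro sum.cong refl)
    fix i' show "(\<Sum>j'<p. if i' = i \<and> j' = j then f ^ i * h ^ j * e ^ l else 0)
      = (if i' = i then f ^ i * h ^ j * e ^ l else 0)"
      using assms(2) by (cases "i' = i") auto
  qed
  also have "\<dots> = f ^ i * h ^ j * e ^ l" using assms(1) by simp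
  finally show ?thesis .
qed

lemma hasLow_0: "hasLow L 0" unfolding hasLow_def using Lc_zero by (intro exI[of _ "\<lambda>_ _ _. 0"]) auto

lemma hasLow_add: "hasLow L x \<Longrightarrow> hasLow L y \<Longrightarrow> hasLow L (x + y)"
proof -
  assume "hasLow L x" "hasLow L y"
  then obtain cf1 cf2 where "x = Lc cf1" "\<forall>i j l. l < L \<longrightarrow> cf1 i j l = 0"
    "y = Lc cf2" "\<forall>i j l. l < L \<longrightarrow> cf2 i j l = 0" unfolding hasLow_def by blast
  then show ?thesis unfolding hasLow_def
    by (intro exI[of _ "\<lambda>i j l. cf1 i j l + cf2 i j l"]) (simp add: Lc_add)
qed

lemma hasLow_smult: "hasLow L x \<Longrightarrow> hasLow L (sc c * x)"
proof -
  assume "hasLow L x"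
  then obtain cf1 where "x = Lc cf1" "\<forall>i j l. l < L \<longrightarrow> cf1 i j l = 0" unfolding hasLow_def by blast
  then show ?thesis unfolding hasLow_def
    by (intro exI[of _ "\<lambda>i j l. c * cf1 i j l"]) (simp add: Lc_smult)
qed

lemma hasLow_sum: "(\<And>k. k \<in> A \<Longrightarrow> hasLow L (g k)) \<Longrightarrow> hasLow L (sum g A)"
  by (induction A rule: infinite_finite_induct) (auto simp: hasLow_0 hasLow_add)

lemma hasLow_basis:
  assumes "i < p" "j < p" "L \<le> l"
  shows "hasLow L (f ^ i * h ^ j * e ^ l)"
proof (cases "l < p")
  case True
  show ?thesis unfolding hasLow_def
    by (rule exI[of _ "\<lambda>i' j' l'. if i' = i \<and> j' = j \<and> l' = l then 1 else 0"])
       (use Lc_ind[OF assms(1,2) True] assms(3) in auto)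
next
  case False
  then have "e ^ l = e ^ p * e ^ (l - p)" by (simp add: power_add[symmetric])
  then have "e ^ l = 0" using ep by simp
  then show ?thesis using hasLow_0 by simp
qed

lemma hasLow_right_e: "hasLow L (y * e ^ L)"
proof -
  obtain cf where y: "y = Lc cf" using span by blast
  have "y * e ^ L = (\<Sum>i<p. \<Sum>j<p. \<Sum>l<p. sc (cf i j l) * (f ^ i * h ^ j * e ^ (l + L)))"
    unfolding y Lc_def by (simp add: sum_distrib_right mult.assoc power_add)
  also have "hasLow L \<dots>"
    by (intro hasLow_sum hasLow_smult hasLow_basis) auto
  finally show ?thesis .
qed

lemma helper_sc: "sc b * (y * (sc c * z) * w) = sc (b * c) * (y * z * w)"
proof -
  have "y * (sc c * z) * w = sc c * (y * z * w)" by (simp only: sc_left_comm mult.assoc)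
  then show ?thesis by (simp only: sc_scmult)
qed

lemma Lc_form:
  assumes m: "m < p" and dq: "degree q < p"
  shows "(\<Sum>i<p. sc (b i) * (f ^ i * peval sc q h * e ^ m))
       = Lc (\<lambda>i j l. if l = m then b i * coeff q j else 0)"
proof -
  have "(\<Sum>i<p. sc (b i) * (f ^ i * peval sc q h * e ^ m))
      = (\<Sum>i<p. \<Sum>j<p. sc (b i * coeff q j) * (f ^ i * h ^ j * e ^ m))"
    unfolding peval_sum_less[OF dq]
    by (simp only: sum_distrib_left sum_distrib_right helper_sc)
  also have "\<dots> = Lc (\<lambda>i j l. if l = m then b i * coeff q j else 0)"
    unfolding Lc_def
  proof (intro sum.cong refl)
    fix i j
    show "sc (b i * coeff q j) * (f ^ i * h ^ j * e ^ m) =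
      (\<Sum>l<p. sc (if l = m then b i * coeff q j else 0) * (f ^ i * h ^ j * e ^ l))"
      using sum_single[OF m, of "b i * coeff q j" "\<lambda>l. f ^ i * h ^ j * e ^ l"] by simp
  qed
  finally show ?thesis .
qed

lemma pbw_key:
  assumes m: "m < p" and q: "q \<noteq> 0" "degree q < p"
    and H: "hasLow (Suc m) (\<Sum>i<p. sc (b i) * (f ^ i * peval sc q h * e ^ m))"
  shows "\<forall>i<p. b i = 0"
proof (intro allI impI)
  fix i assume i: "i < p"
  from H obtain cf where cf: "(\<Sum>i<p. sc (b i) * (f ^ i * peval sc q h * e ^ m)) = Lc cf"
    "\<And>i j l. l < Suc m \<Longrightarrow> cf i j l = 0" unfolding hasLow_def by blast
  have "Lc (\<lambda>i j l. if l = m then b i * coeff q j else 0) = Lc cf"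
    using cf(1) Lc_form[OF m q(2)] by simp
  from Lc_eq[OF this i q(2) m] cf(2)[of m i "degree q"]
  have "b i * coeff q (degree q) = 0" by simp
  then show "b i = 0" using q(1) by simp
qed

end

context sl2
begin

lemma hf_sc: "h * f = f * h - sc 2 * f" using hf by (simp add: mult_2)

lemma h_fpow: "h * f ^ k = f ^ k * h - sc (2 * of_nat k) * f ^ k"
proof (induction k)
  case 0 then show ?case by simp
next
  case (Suc k)
  have "h * f ^ Suc k = (h * f ^ k) * f" by (simp only: power_Suc2 mult.assoc)
  also have "\<dots> = f ^ k * (h * f) - sc (2 * of_nat k) * f ^ Suc k"
    using Suc by (simp add: left_diff_distrib mult.assoc power_Suc2 power_commutes)
  also have "f ^ k * (h * f) = f ^ Suc k * h - sc 2 * f ^ Suc k"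
  proof -
    have "f ^ k * (h * f) = (f ^ k * f) * h - sc 2 * (f ^ k * f)"
      unfolding hf_sc right_diff_distrib sc_left_comm[of "f ^ k" 2 f] by (simp only: mult.assoc)
    then show ?thesis by (simp only: power_Suc2[symmetric])
  qed
  finally have X: "h * f ^ Suc k = f ^ Suc k * h - sc 2 * f ^ Suc k - sc (2 * of_nat k) * f ^ Suc k" .
  have "(2 * of_nat (Suc k) :: 'k) = 2 + 2 * of_nat k" by (simp add: algebra_simps)
  then have Y: "sc (2 * of_nat (Suc k)) * f ^ Suc k = sc 2 * f ^ Suc k + sc (2 * of_nat k) * f ^ Suc k"
    by (simp only: sc_add distrib_right)
  show ?case unfolding X Y by (simp only: diff_diff_eq)
qed

lemma h_fk_vec:
  assumes "h * y = sc r * y"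
  shows "h * (f ^ k * y) = sc (r - 2 * of_nat k) * (f ^ k * y)"
proof -
  have "h * (f ^ k * y) = f ^ k * (h * y) - sc (2 * of_nat k) * (f ^ k * y)"
    by (simp add: mult.assoc[symmetric] h_fpow left_diff_distrib)
  also have "f ^ k * (h * y) = sc r * (f ^ k * y)"
    unfolding assms by (rule sc_left_comm)
  finally show ?thesis by (simp add: sc_diff left_diff_distrib)
qed

lemma e_h_shift: "e * (h - sc c) = (h - sc (c + 2)) * e"
proof -
  have "e * (h - sc c) = e * h - sc c * e" by (simp add: right_diff_distrib sc_comm)
  also have "\<dots> = (h - 2) * e - sc c * e" by (simp only: e_h2)
  also have "\<dots> = h * e - (sc c + 2) * e" by (simp add: algebra_simps)
  also have "\<dots> = (h - sc (c + 2)) * e" by (simp add: left_diff_distrib sc_add)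
  finally show ?thesis .
qed

lemma e_pow_peval: "e ^ n * peval sc q h = peval sc q (h - sc (2 * of_nat n)) * e ^ n"
proof (induction n)
  case 0 then show ?case by simp
next
  case (Suc n)
  have "e ^ Suc n * peval sc q h = e * (e ^ n * peval sc q h)" by (simp add: mult.assoc)
  also have "\<dots> = (e * peval sc q (h - sc (2 * of_nat n))) * e ^ n" using Suc by (simp add: mult.assoc)
  also have "e * peval sc q (h - sc (2 * of_nat n)) = peval sc q (h - sc (2 * of_nat n + 2)) * e"
    by (rule peval_intertwine[OF e_h_shift])
  also have "(2 * of_nat n + 2 :: 'k) = 2 * of_nat (Suc n)" by simp
  finally show ?case by (simp add: mult.assoc)
qed

lemma peval_shift: "peval sc q (h - sc c) = peval sc (pcompose q [:- c, 1:]) h"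
  by (simp add: peval_pcompose sc_minus)

lemma hpow_vec:
  assumes J: "left_ideal J" and w: "h * w - sc r * w \<in> J"
  shows "h ^ j * w - sc (r ^ j) * w \<in> J"
proof (induction j)
  case 0 then show ?case using li_0[OF J] by simp
next
  case (Suc j)
  have "h ^ Suc j * w - sc (r ^ Suc j) * w
      = h * (h ^ j * w - sc (r ^ j) * w) + sc (r ^ j) * (h * w - sc r * w)"
  proof -
    have "h * (sc (r ^ j) * w) = sc (r ^ j) * (h * w)" by (rule sc_left_comm)
    moreover have "sc (r ^ j) * (sc r * w) = sc (r ^ Suc j) * w" by (simp add: sc_scmult mult.commute)
    ultimately show ?thesis by (simp add: right_diff_distrib mult.assoc)
  qed
  also have "\<dots> \<in> J" using Suc w J li_add li_mult by blast
  finally show ?case .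
qed

lemma decomp:
  assumes J: "left_ideal J" and w: "e * w \<in> J" "h * w - sc r * w \<in> J"
  shows "Lc cf * w - (\<Sum>i<p. sc (\<Sum>j<p. cf i j 0 * r ^ j) * (f ^ i * w)) \<in> J"
proof -
  define T where "T i j l = sc (cf i j l) * (f ^ i * h ^ j * e ^ l) * w
     - sc (if l = 0 then cf i j 0 * r ^ j else 0) * (f ^ i * w)" for i j l
  have TJ: "T i j l \<in> J" for i j l
  proof (cases l)
    case 0
    have "T i j l = sc (cf i j 0) * (f ^ i * (h ^ j * w - sc (r ^ j) * w))"
    proof -
      have "f ^ i * (sc (r ^ j) * w) = sc (r ^ j) * (f ^ i * w)" by (rule sc_left_comm)
      then show ?thesis unfolding T_def using 0
        by (simp add: right_diff_distrib mult.assoc sc_scmult)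
    qed
    also have "\<dots> \<in> J" using hpow_vec[OF J w(2)] J li_mult by blast
    finally show ?thesis .
  next
    case (Suc l')
    have "T i j l = (sc (cf i j l) * (f ^ i * h ^ j * e ^ l')) * (e * w)"
      unfolding T_def using Suc by (simp del: power_Suc add: mult.assoc power_Suc2)
    also have "\<dots> \<in> J" using w(1) J li_mult by blast
    finally show ?thesis .
  qed
  have "(\<Sum>i<p. \<Sum>j<p. \<Sum>l<p. T i j l) \<in> J"
    using TJ J by (intro li_sum) auto
  also have "(\<Sum>i<p. \<Sum>j<p. \<Sum>l<p. T i j l)
     = Lc cf * w - (\<Sum>i<p. sc (\<Sum>j<p. cf i j 0 * r ^ j) * (f ^ i * w))"
  proof -
    have 1: "(\<Sum>l<p. sc (if l = 0 then cf i j 0 * r ^ j else 0) * (f ^ i * w))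
        = sc (cf i j 0 * r ^ j) * (f ^ i * w)" for i j
      using sum_single[OF p_pos, of "cf i j 0 * r ^ j" "\<lambda>_. f ^ i * w"] by simp
    have "(\<Sum>i<p. \<Sum>j<p. \<Sum>l<p. T i j l)
       = (\<Sum>i<p. \<Sum>j<p. \<Sum>l<p. sc (cf i j l) * (f ^ i * h ^ j * e ^ l) * w)
         - (\<Sum>i<p. \<Sum>j<p. sc (cf i j 0 * r ^ j) * (f ^ i * w))"
      unfolding T_def by (simp only: sum_subtractf 1)
    also have "(\<Sum>i<p. \<Sum>j<p. \<Sum>l<p. sc (cf i j l) * (f ^ i * h ^ j * e ^ l) * w) = Lc cf * w"
      unfolding Lc_def by (simp only: sum_distrib_right)
    also have "(\<Sum>i<p. \<Sum>j<p. sc (cf i j 0 * r ^ j) * (f ^ i * w))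
       = (\<Sum>i<p. sc (\<Sum>j<p. cf i j 0 * r ^ j) * (f ^ i * w))"
      by (simp only: sc_sum sum_distrib_right)
    finally show ?thesis .
  qed
  finally show ?thesis .
qed

lemma fe_chain:
  assumes hG: "h * G = sc w * G" and z: "f * (e * G) = 0"
  shows "\<exists>d. f * (e ^ Suc l * G) = sc d * (e ^ l * G)"
proof (induction l)
  case 0 then show ?case using z by (intro exI[of _ 0]) simp
next
  case (Suc l)
  then obtain d where d: "f * (e ^ Suc l * G) = sc d * (e ^ l * G)" by blast
  have fe: "f * e = e * f - h" using ef by (simp add: algebra_simps)
  have "f * (e ^ Suc (Suc l) * G) = (f * e) * (e ^ Suc l * G)" by (simp add: mult.assoc)
  also have "\<dots> = e * (f * (e ^ Suc l * G)) - h * (e ^ Suc l * G)"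
    by (simp add: fe left_diff_distrib mult.assoc)
  also have "\<dots> = e * (sc d * (e ^ l * G)) - sc (w + 2 * of_nat (Suc l)) * (e ^ Suc l * G)"
    by (simp only: d h_ek_vec[OF hG])
  also have "e * (sc d * (e ^ l * G)) = sc d * (e ^ Suc l * G)"
  proof -
    have "e * (sc d * (e ^ l * G)) = sc d * (e * (e ^ l * G))" by (rule sc_left_comm)
    also have "e * (e ^ l * G) = e ^ Suc l * G" by (simp add: mult.assoc)
    finally show ?thesis .
  qed
  finally have "f * (e ^ Suc (Suc l) * G) = sc (d - (w + 2 * of_nat (Suc l))) * (e ^ Suc l * G)"
    by (simp add: sc_diff left_diff_distrib)
  then show ?case by blast
qed

lemma fe_kill:
  assumes hG: "h * G = sc w * G" and z: "f * (e * G) = 0"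
  shows "f ^ Suc k * (e ^ Suc k * G) = 0"
proof (induction k)
  case 0 then show ?case using z by simp
next
  case (Suc k)
  obtain d where d: "f * (e ^ Suc (Suc k) * G) = sc d * (e ^ Suc k * G)"
    using fe_chain[OF hG z] by blast
  have "f ^ Suc (Suc k) * (e ^ Suc (Suc k) * G) = f ^ Suc k * (f * (e ^ Suc (Suc k) * G))"
    by (simp only: power_Suc2 mult.assoc)
  also have "\<dots> = sc d * (f ^ Suc k * (e ^ Suc k * G))" by (simp only: d sc_left_comm)
  also have "\<dots> = 0" using Suc by simp
  finally show ?case .
qed

end

context sl2
begin

lemma sum_sc_left: "y * (\<Sum>i\<in>A. sc (b i) * x i) = (\<Sum>i\<in>A. sc (b i) * (y * x i))"
  by (simp only: sum_distrib_left sc_left_comm)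

lemma sum_sc_sc: "sc c * (\<Sum>i\<in>A. sc (b i) * x i) = (\<Sum>i\<in>A. sc (c * b i) * x i)"
  by (simp only: sum_distrib_left sc_scmult)

lemma sum_sc_diff: "(\<Sum>i\<in>A. sc (b i) * x i) - (\<Sum>i\<in>A. sc (b' i) * x i) = (\<Sum>i\<in>A. sc (b i - b' i) * x i)"
  by (simp only: sum_subtractf[symmetric] sc_diff left_diff_distrib)

lemma sum_only0:
  assumes "\<forall>i. 0 < i \<longrightarrow> i < p \<longrightarrow> b i = 0"
  shows "(\<Sum>i<p. sc (b i) * (f ^ i * y)) = sc (b 0) * y"
proof -
  have "(\<Sum>i<p. sc (b i) * (f ^ i * y)) = (\<Sum>i<p. if i = 0 then sc (b 0) * y else 0)"
    using assms by (intro sum.cong) auto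
  also have "\<dots> = sc (b 0) * y" using p_pos by simp
  finally show ?thesis .
qed

lemma central_comm: "central z \<Longrightarrow> z * x = x * z" by (simp add: central_def)

lemma four_ne0: "(4::'k) \<noteq> 0"
proof -
  have e4: "(4::'k) = 2 * 2" by simp
  show ?thesis unfolding e4 by (rule no_zero_divisors[OF two_ne0 two_ne0])
qed

lemma nonvanish:
  assumes a0: "a = 0" and pci: "prim_central_idem \<pi>" and M: "max_left_ideal M" and pi1: "1 - \<pi> \<in> M"
    and u: "u \<notin> M" "e * u \<in> M" "h * u - sc l0 * u \<in> M" and l0: "l0 ^ p - l0 = a"
    and al: "\<alpha> = (l0 + 1) ^ 2" "\<alpha> \<noteq> 0"
  shows "\<pi> * (cas - sc \<alpha>) \<noteq> 0"
proof
  assume Z: "\<pi> * (cas - sc \<alpha>) = 0"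
  have pic: "central \<pi>" and pi2: "\<pi> * \<pi> = \<pi>" using pci by (auto simp: prim_central_idem_def)
  have LM: "left_ideal M" and one: "1 \<notin> M" using M max_li max_1 by auto
  have l0p: "l0 ^ p = l0" using l0 a0 by simp
  have "(l0 + 1) ^ p = l0 + 1" using frob[of l0 1] l0p by simp
  then obtain m where m: "m < p" "l0 + 1 = of_nat m" using Fp by blast
  have m0: "m \<noteq> 0"
  proof
    assume "m = 0"
    then have "\<alpha> = 0" using m al by simp
    then show False using al by simp
  qed
  define w where "w = l0 - 2 * of_nat m"
  have wp: "w ^ p = w"
  proof -
    have "(2 * of_nat m :: 'k) = of_nat (2 * m)" by simp
    then have "(2 * of_nat m :: 'k) ^ p = 2 * of_nat m" using frob_nat by metis
    then show ?thesis unfolding w_def using l0p by (simp add: frob_diff)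
  qed
  have wroot: "poly Ppoly w = 0" unfolding poly_P using wp a0 by simp
  have w1: "(w + 1) ^ 2 = \<alpha>"
  proof -
    have "w + 1 = - (l0 + 1)" unfolding w_def using m(2) by (simp add: algebra_simps)
    then have "(w + 1) ^ 2 = (- (l0 + 1)) ^ 2" by (rule arg_cong)
    then show ?thesis using al(1) by (simp only: power2_minus)
  qed
  have wm: "w + 2 * of_nat m = l0" unfolding w_def by simp
  define Qw where "Qw = Ppoly div [:- w, 1:]"
  have PQw: "Ppoly = [:- w, 1:] * Qw"
  proof -
    have "[:- w, 1:] dvd Ppoly" using wroot poly_eq_0_iff_dvd by blast
    then show ?thesis unfolding Qw_def by (rule sym[OF dvd_mult_div_cancel])
  qed
  have Qw_nz: "Qw \<noteq> 0" using PQw P_nz by auto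
  have degQw: "degree Qw = p - 1"
  proof -
    have "degree Ppoly = degree [:- w, 1:] + degree Qw"
      by (subst PQw) (rule degree_mult_eq, simp, rule Qw_nz)
    then show ?thesis using degP by simp
  qed
  define g where "g = peval sc Qw h"
  have hg: "h * g = sc w * g"
  proof -
    have "0 = peval sc Ppoly h" using peval_P by simp
    also have "\<dots> = (sc (- w) + h) * g" unfolding g_def by (subst PQw) (simp only: peval_mult peval_X)
    finally show ?thesis by (simp add: sc_minus algebra_simps)
  qed
  define v where "v = e ^ m * g"
  have hv: "h * v = sc l0 * v" unfolding v_def using h_ek_vec[OF hg, of m] wm by simp
  define Qv where "Qv = pcompose Qw [:- (2 * of_nat m), 1:]"
  have v_form: "v = peval sc Qv h * e ^ m"
    unfolding v_def g_def Qv_def by (simp only: e_pow_peval peval_shift)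
  have degQv: "degree Qv = p - 1" unfolding Qv_def by (simp add: degree_pcompose degQw)
  have Qv_nz: "Qv \<noteq> 0" using degQv p_gt by auto
  have degQv': "degree Qv < p" using degQv p_pos by simp
  define J where "J = {x * (e * v) | x. True}"
  have LJ: "left_ideal J"
    unfolding left_ideal_def J_def
  proof (intro conjI ballI allI)
    show "0 \<in> {x * (e * v) |x. True}" by (rule CollectI, rule exI[of _ 0]) simp
  next
    fix x y assume "x \<in> {x * (e * v) |x. True}" "y \<in> {x * (e * v) |x. True}"
    then obtain x' y' where "x = x' * (e * v)" "y = y' * (e * v)" by blast
    then show "x + y \<in> {x * (e * v) |x. True}" by (auto simp: distrib_right intro!: exI[of _ "x' + y'"])
  next
    fix r x assume "x \<in> {x * (e * v) |x. True}"
    then obtain x' where "x = x' * (e * v)" by blast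
    then show "r * x \<in> {x * (e * v) |x. True}" by (auto simp: mult.assoc intro!: exI[of _ "r * x'"])
  qed
  have evJ: "e * v \<in> J" unfolding J_def by (auto intro!: exI[of _ 1])
  have J_low: "hasLow (Suc m) x" if xJ: "x \<in> J" for x
  proof -
    obtain y where y: "x = y * (e * v)" using xJ unfolding J_def by blast
    have "e * v = e ^ Suc m * g" unfolding v_def by (simp add: mult.assoc)
    also have "\<dots> = peval sc Qw (h - sc (2 * of_nat (Suc m))) * e ^ Suc m"
      unfolding g_def by (rule e_pow_peval)
    finally have "x = (y * peval sc Qw (h - sc (2 * of_nat (Suc m)))) * e ^ Suc m"
      unfolding y by (simp add: mult.assoc)
    then show ?thesis using hasLow_right_e[of "Suc m" "y * peval sc Qw (h - sc (2 * of_nat (Suc m)))"] by simp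
  qed
  have PBWJ: "\<forall>i<p. b i = 0" if bJ: "(\<Sum>i<p. sc (b i) * (f ^ i * v)) \<in> J" for b
  proof -
    have "(\<Sum>i<p. sc (b i) * (f ^ i * v)) = (\<Sum>i<p. sc (b i) * (f ^ i * peval sc Qv h * e ^ m))"
      unfolding v_form by (simp only: mult.assoc)
    then have "hasLow (Suc m) (\<Sum>i<p. sc (b i) * (f ^ i * peval sc Qv h * e ^ m))"
      using J_low[OF bJ] by simp
    then show ?thesis by (rule pbw_key[OF m(1) Qv_nz degQv'])
  qed
  have single: "c = 0" if kc: "k < p" "sc c * (f ^ k * v) \<in> J" for c k
  proof -
    have eq: "(\<Sum>i<p. sc (if i = k then c else 0) * (f ^ i * v)) = sc c * (f ^ k * v)"
      by (rule sum_single[OF kc(1)])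
    have "(\<Sum>i<p. sc (if i = k then c else 0) * (f ^ i * v)) \<in> J" using kc(2) by (simp only: eq)
    then have "\<forall>i<p. (if i = k then c else 0) = 0" by (rule PBWJ)
    then show ?thesis using kc(1) by auto
  qed
  define G where "G = \<pi> * g"
  have hG: "h * G = sc w * G"
  proof -
    have "h * G = \<pi> * (h * g)" unfolding G_def
      by (simp only: mult.assoc[symmetric] central_comm[OF pic, of h])
    also have "\<dots> = sc w * G" unfolding hg G_def by (rule sc_left_comm)
    finally show ?thesis .
  qed
  have "cas * G - sc ((w + 1) ^ 2) * G = 4 * (f * (e * G))" by (rule cas_hw[OF hG])
  moreover have "cas * G - sc ((w + 1) ^ 2) * G = 0"
  proof -
    have "cas * G - sc ((w + 1) ^ 2) * G = (cas - sc \<alpha>) * \<pi> * g"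
      unfolding G_def w1 by (simp add: left_diff_distrib mult.assoc)
    also have "\<dots> = \<pi> * (cas - sc \<alpha>) * g" by (simp only: cas_sc_comm)
    also have "\<dots> = 0" using Z by simp
    finally show ?thesis .
  qed
  ultimately have "sc 4 * (f * (e * G)) = 0" by simp
  then have feG: "f * (e * G) = 0" using sc_mult_zero four_ne0 by blast
  obtain m' where m': "m = Suc m'" using m0 by (cases m) auto
  have fk: "f ^ m * (e ^ m * G) = 0" unfolding m' by (rule fe_kill[OF hG feG])
  have emG: "e ^ m * G = \<pi> * v"
    unfolding G_def v_def by (simp only: mult.assoc[symmetric] central_comm[OF pic, of "e ^ m"])
  have fpv: "f ^ m * (\<pi> * v) = 0" using fk emG by simp
  obtain cf where cf: "1 - \<pi> = Lc cf" using span by blast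
  define b where "b i = (\<Sum>j<p. cf i j 0 * l0 ^ j)" for i
  have hv0: "h * v - sc l0 * v \<in> J" using hv li_0[OF LJ] by simp
  have Dv: "(1 - \<pi>) * v - (\<Sum>i<p. sc (b i) * (f ^ i * v)) \<in> J"
    unfolding cf b_def by (rule decomp[OF LJ evJ hv0])
  have Du: "(1 - \<pi>) * u - (\<Sum>i<p. sc (b i) * (f ^ i * u)) \<in> M"
    unfolding cf b_def by (rule decomp[OF LM u(2) u(3)])
  have bz: "\<forall>i. 0 < i \<longrightarrow> i < p \<longrightarrow> b i = 0"
  proof -
    define S where "S = (\<Sum>i<p. sc (b i) * (f ^ i * v))"
    define D where "D = (1 - \<pi>) * v - S"
    have DJ: "D \<in> J" using Dv unfolding D_def S_def .
    have "h * D - sc l0 * D \<in> J" using DJ LJ li_mult li_diff by blast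
    moreover have "h * D - sc l0 * D = (\<Sum>i<p. sc (b i * (2 * of_nat i)) * (f ^ i * v))"
    proof -
      have 1: "h * ((1 - \<pi>) * v) = sc l0 * ((1 - \<pi>) * v)"
      proof -
        have "h * ((1 - \<pi>) * v) = (1 - \<pi>) * (h * v)"
          by (simp add: left_diff_distrib right_diff_distrib mult.assoc[symmetric] central_comm[OF pic, of h])
        also have "\<dots> = sc l0 * ((1 - \<pi>) * v)" unfolding hv by (rule sc_left_comm)
        finally show ?thesis .
      qed
      have 2: "h * S = (\<Sum>i<p. sc (b i * (l0 - 2 * of_nat i)) * (f ^ i * v))"
        unfolding S_def sum_sc_left h_fk_vec[OF hv] by (simp only: sc_scmult)
      have 3: "sc l0 * S = (\<Sum>i<p. sc (l0 * b i) * (f ^ i * v))"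
        unfolding S_def by (rule sum_sc_sc)
      have "h * D - sc l0 * D = (h * ((1 - \<pi>) * v) - sc l0 * ((1 - \<pi>) * v)) - (h * S - sc l0 * S)"
        unfolding D_def by (simp add: right_diff_distrib)
      also have "\<dots> = - (h * S - sc l0 * S)" using 1 by simp
      also have "h * S - sc l0 * S = (\<Sum>i<p. sc (b i * (l0 - 2 * of_nat i) - l0 * b i) * (f ^ i * v))"
        unfolding 2 3 by (rule sum_sc_diff)
      also have "- \<dots> = (\<Sum>i<p. sc (b i * (2 * of_nat i)) * (f ^ i * v))"
      proof -
        have E: "\<And>i. b i * (l0 - 2 * of_nat i) - l0 * b i = - (b i * (2 * of_nat i))"
          by (simp add: algebra_simps)
        have "- (\<Sum>i<p. sc (b i * (l0 - 2 * of_nat i) - l0 * b i) * (f ^ i * v))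
            = - (\<Sum>i<p. - (sc (b i * (2 * of_nat i)) * (f ^ i * v)))"
          by (simp only: E sc_minus mult_minus_left)
        also have "\<dots> = (\<Sum>i<p. sc (b i * (2 * of_nat i)) * (f ^ i * v))"
          by (simp only: sum_negf minus_minus)
        finally show ?thesis .
      qed
      finally show ?thesis .
    qed
    ultimately have "(\<Sum>i<p. sc (b i * (2 * of_nat i)) * (f ^ i * v)) \<in> J" by simp
    from PBWJ[OF this] have "\<forall>i<p. b i * (2 * of_nat i) = 0" .
    then show ?thesis
    proof (intro allI impI)
      fix i assume i: "0 < i" "i < p" and H: "\<forall>i<p. b i * (2 * of_nat i) = 0"
      have "(of_nat i :: 'k) \<noteq> 0" using of_nat_inj_p[of i 0] i p_pos by auto
      then show "b i = 0" using H i two_ne0 by auto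
    qed
  qed
  have X1: "(1 - \<pi>) * v - sc (b 0) * v \<in> J" using Dv sum_only0[OF bz, of v] by simp
  have Y1: "(1 - \<pi>) * u - sc (b 0) * u \<in> M" using Du sum_only0[OF bz, of u] by simp
  define b0 where "b0 = b 0"
  have X2: "(1 - \<pi>) * v - sc b0 * ((1 - \<pi>) * v) \<in> J"
  proof -
    have "(1 - \<pi>) * ((1 - \<pi>) * v - sc b0 * v) \<in> J" using X1 LJ li_mult unfolding b0_def by blast
    moreover have "(1 - \<pi>) * ((1 - \<pi>) * v - sc b0 * v) = (1 - \<pi>) * v - sc b0 * ((1 - \<pi>) * v)"
    proof -
      have "(1 - \<pi>) * ((1 - \<pi>) * v) = (1 - \<pi>) * v"
        by (simp add: mult.assoc[symmetric] left_diff_distrib right_diff_distrib pi2)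
      moreover have "(1 - \<pi>) * (sc b0 * v) = sc b0 * ((1 - \<pi>) * v)" by (rule sc_left_comm)
      ultimately show ?thesis by (simp add: right_diff_distrib)
    qed
    ultimately show ?thesis by simp
  qed
  have "sc (b0 * b0 - b0) * v \<in> J"
  proof -
    define A where "A = (1 - \<pi>) * v"
    have X1': "A - sc b0 * v \<in> J" using X1 unfolding A_def b0_def .
    have X2': "A - sc b0 * A \<in> J" using X2 unfolding A_def .
    have "(A - sc b0 * v) - (A - sc b0 * A) - sc b0 * (A - sc b0 * v) = sc (b0 * b0) * v - sc b0 * v"
      by (simp add: right_diff_distrib sc_scmult algebra_simps)
    also have "\<dots> = sc (b0 * b0 - b0) * v" by (simp only: sc_diff left_diff_distrib)
    finally have eq: "sc (b0 * b0 - b0) * v = (A - sc b0 * v) - (A - sc b0 * A) - sc b0 * (A - sc b0 * v)" by simp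
    have "sc b0 * (A - sc b0 * v) \<in> J" using X1' LJ li_mult by blast
    then have "(A - sc b0 * v) - (A - sc b0 * A) - sc b0 * (A - sc b0 * v) \<in> J"
      using X1' X2' LJ li_diff by blast
    then show ?thesis unfolding eq .
  qed
  then have "sc (b0 * b0 - b0) * (f ^ 0 * v) \<in> J" by simp
  then have "b0 * b0 - b0 = 0" using single p_pos by blast
  then have "b0 * (b0 - 1) = 0" by (simp add: algebra_simps)
  then have "b0 = 0 \<or> b0 = 1" by simp
  then show False
  proof
    assume b1: "b0 = 1"
    have "(1 - \<pi>) * u \<in> M"
    proof -
      have "u * (1 - \<pi>) \<in> M" using pi1 LM li_mult by blast
      moreover have "u * (1 - \<pi>) = (1 - \<pi>) * u"
        by (simp add: left_diff_distrib right_diff_distrib central_comm[OF pic, of u])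
      ultimately show ?thesis by simp
    qed
    moreover have "(1 - \<pi>) * u - u \<in> M" using Y1 b1 unfolding b0_def by simp
    ultimately have "(1 - \<pi>) * u - ((1 - \<pi>) * u - u) \<in> M" using LM li_diff by blast
    then show False using u by simp
  next
    assume b00: "b0 = 0"
    have "(1 - \<pi>) * v \<in> J" using X1 b00 unfolding b0_def by simp
    then have "f ^ m * ((1 - \<pi>) * v) \<in> J" using LJ li_mult by blast
    moreover have "f ^ m * ((1 - \<pi>) * v) = f ^ m * v"
      using fpv by (simp add: left_diff_distrib right_diff_distrib)
    ultimately have "sc 1 * (f ^ m * v) \<in> J" by simp
    then have "(1::'k) = 0" using single m(1) by blast
    then show False by simp
  qed
qed

end

context sl2
begin

lemma block_info:
  assumes pci: "prim_central_idem \<pi>" and bs: "block_scalar sc (casimir e f h) \<pi> \<alpha>"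
  obtains M u r where "max_left_ideal M" "1 - \<pi> \<in> M" "cas - sc \<alpha> \<in> M"
    "u \<notin> M" "e * u \<in> M" "h * u - sc r * u \<in> M" "r ^ p - r = a" "\<alpha> = (r + 1) ^ 2"
proof -
  obtain M where M: "max_left_ideal M" "1 - \<pi> \<in> M" using exists_block_ideal[OF pci] by blast
  have c: "cas - sc \<alpha> \<in> M" using bs M unfolding block_scalar_def cas_def by blast
  obtain u r where u: "u \<notin> M" "e * u \<in> M" "h * u - sc r * u \<in> M" "r ^ p - r = a"
    using hw_exists[OF M(1)] by blast
  have "\<alpha> = (r + 1) ^ 2" using scalar_hw[OF max_li[OF M(1)] u(1-3) c] .
  then show ?thesis using that M c u by blast
qed

definition sI :: "nat \<Rightarrow> 'k" where "sI i = lam0 + 1 + of_nat i"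

definition Iset :: "'k \<Rightarrow> nat set" where "Iset \<alpha> = {i \<in> {..<p}. (sI i) ^ 2 = \<alpha>}"

lemma R0_fact: "R0 = [:- \<alpha>, 1:] ^ card (Iset \<alpha>) * (\<Prod>i\<in>{..<p} - Iset \<alpha>. [:- ((sI i) ^ 2), 1:])"
  and S_nz: "poly (\<Prod>i\<in>{..<p} - Iset \<alpha>. [:- ((sI i) ^ 2), 1:]) \<alpha> \<noteq> 0"
proof -
  define g where "g i = [:- ((sI i) ^ 2), 1:]" for i
  have sub: "Iset \<alpha> \<subseteq> {..<p}" unfolding Iset_def by auto
  have "R0 = prod g {..<p}" unfolding R0_def g_def sI_def ..
  also have "\<dots> = prod g ({..<p} - Iset \<alpha>) * prod g (Iset \<alpha>)"
    by (rule prod.subset_diff[OF sub]) simp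
  also have "prod g (Iset \<alpha>) = [:- \<alpha>, 1:] ^ card (Iset \<alpha>)"
  proof -
    have "prod g (Iset \<alpha>) = (\<Prod>i\<in>Iset \<alpha>. [:- \<alpha>, 1:])"
      by (rule prod.cong) (auto simp: g_def Iset_def)
    then show ?thesis by simp
  qed
  finally show "R0 = [:- \<alpha>, 1:] ^ card (Iset \<alpha>) * (\<Prod>i\<in>{..<p} - Iset \<alpha>. [:- ((sI i) ^ 2), 1:])"
    unfolding g_def by (simp add: mult.commute)
  show "poly (\<Prod>i\<in>{..<p} - Iset \<alpha>. [:- ((sI i) ^ 2), 1:]) \<alpha> \<noteq> 0"
    unfolding poly_prod by (auto simp: Iset_def)
qed

lemma sI_inj: "i < p \<Longrightarrow> j < p \<Longrightarrow> sI i = sI j \<Longrightarrow> i = j"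
  unfolding sI_def using of_nat_inj_p by simp

lemma sI_root: "sI i ^ p - sI i = a"
proof -
  have "sI i = rts i + 1" unfolding sI_def rts_def by simp
  then show ?thesis using rts_root[of i] frob[of "rts i" 1] by simp
qed

lemma alpha_sI:
  assumes "r ^ p - r = a" "\<alpha> = (r + 1) ^ 2"
  obtains j0 where "j0 < p" "\<alpha> = (sI j0) ^ 2"
proof -
  obtain j0 where "j0 < p" "r = rts j0" using root_is_rts[OF assms(1)] by blast
  then have "r + 1 = sI j0" unfolding sI_def rts_def by simp
  then show ?thesis using that \<open>j0 < p\<close> assms(2) by simp
qed

lemma card_I_le2:
  assumes "j0 < p" "\<alpha> = (sI j0) ^ 2"
  shows "card (Iset \<alpha>) \<le> 2"
proof -
  have "card (Iset \<alpha>) \<le> card {sI j0, - sI j0}"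
  proof (rule card_inj_on_le)
    show "inj_on sI (Iset \<alpha>)" by (rule inj_onI) (auto simp: Iset_def intro: sI_inj)
    show "sI ` Iset \<alpha> \<subseteq> {sI j0, - sI j0}" using assms by (auto simp: Iset_def power2_eq_iff)
  qed simp
  also have "\<dots> \<le> 2" by (simp add: card_insert_if)
  finally show ?thesis .
qed

lemma card_I_le1:
  assumes "j0 < p" "\<alpha> = (sI j0) ^ 2" and c: "a \<noteq> 0 \<or> \<alpha> = 0"
  shows "card (Iset \<alpha>) \<le> 1"
proof -
  have "Iset \<alpha> \<subseteq> {j0}"
  proof
    fix i assume i: "i \<in> Iset \<alpha>"
    then have ip: "i < p" and "(sI i) ^ 2 = (sI j0) ^ 2" using assms by (auto simp: Iset_def)
    then have pm: "sI i = sI j0 \<or> sI i = - sI j0" by (simp add: power2_eq_iff)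
    have "sI i = sI j0"
    proof (cases "sI i = sI j0")
      case False
      then have neg: "sI i = - sI j0" using pm by simp
      show ?thesis using c
      proof
        assume a0: "a \<noteq> 0"
        have mp: "(- sI j0) ^ p = - (sI j0 ^ p)"
          by (rule minus_power_prime_CHAR) (use charp prime_p in auto)
        have "a = (- sI j0) ^ p - (- sI j0)" using sI_root[of i] neg by simp
        also have "\<dots> = - (sI j0 ^ p - sI j0)" using mp by simp
        also have "\<dots> = - a" using sI_root[of j0] by simp
        finally have "2 * a = 0" by simp
        then show ?thesis using a0 two_ne0 by simp
      next
        assume "\<alpha> = 0"
        then have "sI j0 = 0" using assms by simp
        then show ?thesis using neg by simp
      qed
    qed simp
    then show "i \<in> {j0}" using sI_inj[OF ip assms(1)] by simp
  qed
  then have "card (Iset \<alpha>) \<le> card {j0}" by (intro card_mono) auto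
  then show ?thesis by simp
qed

lemma block_kill:
  assumes pci: "prim_central_idem \<pi>" and M: "max_left_ideal M" and pi1: "1 - \<pi> \<in> M"
    and c: "cas - sc \<alpha> \<in> M" and K: "card (Iset \<alpha>) \<le> K"
  shows "\<pi> * peval sc ([:- \<alpha>, 1:] ^ K) cas = 0"
proof -
  have LM: "left_ideal M" and one: "1 \<notin> M" using M max_li max_1 by auto
  have z: "\<pi> * peval sc ([:- \<alpha>, 1:] ^ card (Iset \<alpha>)) cas = 0"
    by (rule block_pow[OF pci LM one pi1 c R0_zero R0_fact S_nz])
  have "[:- \<alpha>, 1:] ^ K = [:- \<alpha>, 1:] ^ card (Iset \<alpha>) * [:- \<alpha>, 1:] ^ (K - card (Iset \<alpha>))"
    using K by (simp flip: power_add)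
  then have "\<pi> * peval sc ([:- \<alpha>, 1:] ^ K) cas
     = \<pi> * peval sc ([:- \<alpha>, 1:] ^ card (Iset \<alpha>)) cas * peval sc ([:- \<alpha>, 1:] ^ (K - card (Iset \<alpha>))) cas"
    by (simp add: peval_mult mult.assoc)
  then show ?thesis using z by simp
qed

lemma peval_lin1: "peval sc ([:- \<alpha>, 1:] ^ 1) cas = cas - sc \<alpha>"
  by (simp add: sc_minus)

end

lemma (in sl2) case2_alpha:
  assumes "r ^ p - r = a" "\<alpha> = (r + 1) ^ 2"
  shows "\<alpha> ^ p - 2 * \<alpha> ^ ((p + 1) div 2) + \<alpha> - a ^ 2 = 0"
proof -
  define s where "s = r + 1"
  have s: "s ^ p - s = a" unfolding s_def using assms(1) frob[of r 1] by simp
  have odd: "odd p" using prime_odd_nat[OF prime_p p_gt] .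
  have as: "\<alpha> = s ^ 2" unfolding s_def assms(2) ..
  have 1: "\<alpha> ^ p = (s ^ p) ^ 2" unfolding as by (simp only: power_mult[symmetric] mult.commute)
  have "\<alpha> ^ ((p + 1) div 2) = s ^ (2 * ((p + 1) div 2))" unfolding as by (simp only: power_mult)
  also have "2 * ((p + 1) div 2) = p + 1" using odd by presburger
  also have "s ^ (p + 1) = s ^ p * s" by (simp only: power_add power_one_right)
  finally have 2: "\<alpha> ^ ((p + 1) div 2) = s ^ p * s" .
  have "\<alpha> ^ p - 2 * \<alpha> ^ ((p + 1) div 2) + \<alpha> - a ^ 2 = (s ^ p - s) ^ 2 - a ^ 2"
    unfolding 1 2 by (simp add: as power2_eq_square algebra_simps)
  then show ?thesis using s by simp
qed

theorem corollary4p5: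
  fixes p :: nat and sc :: "'k::field \<Rightarrow> 'a::ring_1" and e f h :: 'a and t a :: 'k
  assumes "prime p" and "p > 2" and "CHAR('k) = p" and "alg_closed TYPE('k)"
    and "sl2_pbw_algebra p sc e f h"
    and "e ^ p = 0" and "f ^ p = sc t" and "h ^ p - h = sc a"
  shows
    "(a = 0 \<and> (t = 0 \<or> t = 1) \<longrightarrow>
       (\<forall>\<pi> \<alpha>. prim_central_idem \<pi> \<and> block_scalar sc (casimir e f h) \<pi> \<alpha> \<longrightarrow>
          (\<exists>n<p. \<alpha> = of_nat n ^ 2) \<and>
          (\<alpha> \<noteq> 0 \<longrightarrow> coinv_kernel sc (casimir e f h) \<pi> = {q. [:- \<alpha>, 1:] ^ 2 dvd q}) \<and>
          (\<alpha> = 0 \<longrightarrow> coinv_kernel sc (casimir e f h) \<pi> = {q. [:0, 1:] dvd q}))) \<and>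
     (t = 0 \<and> a \<noteq> 0 \<longrightarrow>
       (\<forall>\<pi> \<alpha>. prim_central_idem \<pi> \<and> block_scalar sc (casimir e f h) \<pi> \<alpha> \<longrightarrow>
          \<alpha> ^ p - 2 * \<alpha> ^ ((p + 1) div 2) + \<alpha> - a ^ 2 = 0 \<and>
          coinv_kernel sc (casimir e f h) \<pi> = {q. [:- \<alpha>, 1:] dvd q}))"
proof -
  have ka: "k_algebra sc" using assms(5) unfolding sl2_pbw_algebra_def by (elim conjE) assumption
  interpret S: sl2 sc p e f h t a
    by (unfold_locales) (use assms ka in auto)
  have casd: "casimir e f h = S.cas" by (simp add: S.cas_def)
  show ?thesis
  proof (intro conjI impI allI)
    fix \<pi> \<alpha>
    assume a0: "a = 0 \<and> (t = 0 \<or> t = 1)" and pb: "prim_central_idem \<pi> \<and> block_scalar sc (casimir e f h) \<pi> \<alpha>"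
    obtain M u r where M: "max_left_ideal M" "1 - \<pi> \<in> M" "S.cas - sc \<alpha> \<in> M"
      and u: "u \<notin> M" "e * u \<in> M" "h * u - sc r * u \<in> M" "r ^ p - r = a" and al: "\<alpha> = (r + 1) ^ 2"
      by (rule S.block_info[OF conjunct1[OF pb] conjunct2[OF pb]])
    have pic: "central \<pi>" using pb by (simp add: prim_central_idem_def)
    have LM: "left_ideal M" by (rule max_li[OF M(1)])
    have one: "1 \<notin> M" by (rule max_1[OF M(1)])
    obtain j0 where j0: "j0 < p" "\<alpha> = (S.sI j0) ^ 2" by (rule S.alpha_sI[OF u(4) al])
    show "\<exists>n<p. \<alpha> = of_nat n ^ 2"
    proof -
      have "(r + 1) ^ p = r + 1" using u(4) a0 S.frob[of r 1] by simp
      from S.Fp[OF this] obtain n where n: "n < p" "r + 1 = of_nat n" by blast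
      show ?thesis using al n by (intro exI[of _ n]) simp
    qed
    show "coinv_kernel sc (casimir e f h) \<pi> = {q. [:- \<alpha>, 1:] ^ 2 dvd q}" if an: "\<alpha> \<noteq> 0"
    proof -
      have z: "\<pi> * peval sc ([:- \<alpha>, 1:] ^ 2) S.cas = 0"
        by (rule S.block_kill[OF conjunct1[OF pb] M(1,2,3) S.card_I_le2[OF j0]])
      have nz: "\<pi> * (S.cas - sc \<alpha>) \<noteq> 0"
        using S.nonvanish[of \<pi> M u r \<alpha>] a0 pb M u al an by blast
      show ?thesis unfolding casd by (rule S.kernel2[OF LM one M(2) pic M(3) z nz])
    qed
    show "coinv_kernel sc (casimir e f h) \<pi> = {q. [:0, 1:] dvd q}" if az: "\<alpha> = 0"
    proof -
      have z: "\<pi> * peval sc ([:- \<alpha>, 1:] ^ 1) S.cas = 0"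
        by (rule S.block_kill[OF conjunct1[OF pb] M(1,2,3) S.card_I_le1[OF j0]]) (use az in simp)
      then have z1: "\<pi> * (S.cas - sc \<alpha>) = 0" by (simp only: S.peval_lin1)
      have "coinv_kernel sc S.cas \<pi> = {q. [:- \<alpha>, 1:] dvd q}" by (rule S.kernel1[OF LM one M(2) pic M(3) z1])
      then show ?thesis using az casd by simp
    qed
  next
    fix \<pi> \<alpha>
    assume a1: "t = 0 \<and> a \<noteq> 0" and pb: "prim_central_idem \<pi> \<and> block_scalar sc (casimir e f h) \<pi> \<alpha>"
    obtain M u r where M: "max_left_ideal M" "1 - \<pi> \<in> M" "S.cas - sc \<alpha> \<in> M"
      and u: "u \<notin> M" "e * u \<in> M" "h * u - sc r * u \<in> M" "r ^ p - r = a" and al: "\<alpha> = (r + 1) ^ 2"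
      by (rule S.block_info[OF conjunct1[OF pb] conjunct2[OF pb]])
    have pic: "central \<pi>" using pb by (simp add: prim_central_idem_def)
    have LM: "left_ideal M" by (rule max_li[OF M(1)])
    have one: "1 \<notin> M" by (rule max_1[OF M(1)])
    obtain j0 where j0: "j0 < p" "\<alpha> = (S.sI j0) ^ 2" by (rule S.alpha_sI[OF u(4) al])
    show "\<alpha> ^ p - 2 * \<alpha> ^ ((p + 1) div 2) + \<alpha> - a ^ 2 = 0" by (rule S.case2_alpha[OF u(4) al])
    have z: "\<pi> * peval sc ([:- \<alpha>, 1:] ^ 1) S.cas = 0"
      by (rule S.block_kill[OF conjunct1[OF pb] M(1,2,3) S.card_I_le1[OF j0]]) (use a1 in simp)
    then have z1: "\<pi> * (S.cas - sc \<alpha>) = 0" by (simp only: S.peval_lin1)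
    show "coinv_kernel sc (casimir e f h) \<pi> = {q. [:- \<alpha>, 1:] dvd q}"
      unfolding casd by (rule S.kernel1[OF LM one M(2) pic M(3) z1])
  qed
qed

end
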